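(* Let $\alpha>0$, $r\geq q\geq p\geq2$ and $\eta>0$. Then for $f\in\mathcal H^s(\mathbb T^3)$ with $s\geq-2\alpha\eta-\frac{2\alpha}{q}+\frac12-\frac1p$, the free evolution $B_{f^\omega}=e^{-t(-\Delta)^\alpha}f^\omega$ satisfies $$\|B_{f^\omega}\|_{L^r_\omega L^{(\eta,q)}_tL^p_x}\lesssim\sqrt r\,\|f\|_{\mathcal H^s_x},$$ with implicit constant independent of $r$ and $f$.
   Context: $\mathcal H^s(\mathbb T^3)$ has norm $\|f\|_{\mathcal H^s}^2=\sum_{k\in\mathbb Z^3}(1+|k|^2)^s|a_k|^2$ where $f=\sum_ka_ke^{ik\cdot x}$, $a_k\in\mathbb C^3$. $(\Omega,\mathcal A,P)$ is a probability space and $(l_k(\omega))_{k\in\mathbb Z^3}$ are real-valued, zero-mean, independent random variables with distributions $\mu_k$ satisfying $\left|\int_{\mathbb R}e^{\gamma x}d\mu_k(x)\right|\le e^{c\gamma^2}$ for all $\gamma\in\mathbb R$, all $k$, for some $c>0$. The randomization is $f^\omega=\sum_kl_k(\omega)a_ke^{ik\cdot x}$ (componentwise) and $e^{-t(-\Delta)^\alpha}f^\omega=\sum_ke^{-t|k|^{2\alpha}}l_k(\omega)a_ke^{ik\cdot x}$. The weighted-in-time norm on a time interval $(0,T)$ is $\|F\|_{L^{(\eta,q)}_tL^p_x}=\left(\int_0^T\|t^\eta F(\cdot,t)\|_{L^p(\mathbb T^3)}^qdt\right)^{1/q}$, and $\|F\|_{L^r_\omega L^{(\eta,q)}_tL^p_x}=\big(\mathbb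 E\,\|F\|_{L^{(\eta,q)}_tL^p_x}^r\big)^{1/r}$. *)

theory Defs
  imports "HOL-Analysis.Analysis" "HOL-Probability.Probability"
begin

text \<open>Frequencies k in Z^3 are of type int^3; points of T^3 are real^3, with T^3
  identified with the fundamental domain [0, 2 pi]^3 and Lebesgue measure.\<close>

definition ksq :: "int^3 \<Rightarrow> real" where
  "ksq k = (\<Sum>i\<in>UNIV. (real_of_int (k$i))^2)"

definition kdot :: "int^3 \<Rightarrow> real^3 \<Rightarrow> real" where
  "kdot k x = (\<Sum>i\<in>UNIV. real_of_int (k$i) * x$i)"

definition torus :: "(real^3) set" where
  "torus = cbox 0 (\<chi> i. 2 * pi)"

text \<open>Real powers of extended nonnegative reals (exponent assumed positive):
  infinity stays infinity.\<close>
definition epow :: "ennreal \<Rightarrow> real \<Rightarrow> ennreal" where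
  "epow x a = (if x = \<top> then \<top> else ennreal (enn2real x powr a))"

text \<open>Sobolev space H^s: f = sum_k a_k e^{ik.x}, a_k in C^3.\<close>
definition in_Hs :: "real \<Rightarrow> (int^3 \<Rightarrow> complex^3) \<Rightarrow> bool" where
  "in_Hs s a \<longleftrightarrow> (\<lambda>k. (1 + ksq k) powr s * (norm (a k))^2) summable_on UNIV"

definition Hs_norm :: "real \<Rightarrow> (int^3 \<Rightarrow> complex^3) \<Rightarrow> real" where
  "Hs_norm s a = sqrt (\<Sum>\<^sub>\<infinity>k. (1 + ksq k) powr s * (norm (a k))^2)"

text \<open>Free evolution of the randomized datum:
  e^{-t(-Delta)^alpha} f^omega (x) = sum_k e^{-t|k|^{2 alpha}} l_k(omega) a_k e^{ik.x}.\<close>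
definition free_evol ::
  "real \<Rightarrow> (int^3 \<Rightarrow> complex^3) \<Rightarrow> (int^3 \<Rightarrow> 'w \<Rightarrow> real) \<Rightarrow> 'w \<Rightarrow> real \<Rightarrow> real^3 \<Rightarrow> complex^3"
  where
  "free_evol \<alpha> a l \<omega> t x =
     (\<Sum>\<^sub>\<infinity>k. (\<chi> j. complex_of_real (exp (- t * (ksq k) powr \<alpha>) * l k \<omega>)
                     * cis (kdot k x) * (a k $ j)))"

definition Lp_norm :: "real \<Rightarrow> (real^3 \<Rightarrow> complex^3) \<Rightarrow> ennreal" where
  "Lp_norm p F = epow (\<integral>\<^sup>+ x \<in> torus. ennreal (norm (F x) powr p) \<partial>lborel) (1 / p)"

definition wLqLp_norm ::
  "real \<Rightarrow> real \<Rightarrow> real \<Rightarrow> real \<Rightarrow> (real \<Rightarrow> real^3 \<Rightarrow> complex^3) \<Rightarrow> ennreal" where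
  "wLqLp_norm T \<eta> q p F =
     epow (\<integral>\<^sup>+ t \<in> {0<..<T}. epow (ennreal (t powr \<eta>) * Lp_norm p (F t)) q \<partial>lborel) (1 / q)"

definition Lr_wLqLp_norm ::
  "'w measure \<Rightarrow> real \<Rightarrow> real \<Rightarrow> real \<Rightarrow> real \<Rightarrow> real \<Rightarrow> ('w \<Rightarrow> real \<Rightarrow> real^3 \<Rightarrow> complex^3) \<Rightarrow> ennreal" where
  "Lr_wLqLp_norm M r T \<eta> q p F =
     epow (\<integral>\<^sup>+ \<omega>. epow (wLqLp_norm T \<eta> q p (F \<omega>)) r \<partial>M) (1 / r)"

end

theory Submission
  imports Defs
begin


lemma epow_fin: "x \<noteq> \<top> \<Longrightarrow> epow x a = ennreal (enn2real x powr a)"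
  by (simp add: epow_def)

lemma epow_ennreal: "0 \<le> x \<Longrightarrow> epow (ennreal x) a = ennreal (x powr a)"
  by (simp add: epow_def)

lemma epow_top[simp]: "epow \<top> a = \<top>" by (simp add: epow_def)
lemma epow_0[simp]: "a > 0 \<Longrightarrow> epow 0 a = 0" by (simp add: epow_def)

lemma epow_mono: assumes "a > 0" "x \<le> y" shows "epow x a \<le> epow y a"
proof (cases "y = \<top>")
  case True then show ?thesis by (simp add: epow_def)
next
  case False
  then have "x \<noteq> \<top>" using assms top.extremum_unique by blast
  then show ?thesis using False assms
    by (auto simp: epow_def less_top intro!: ennreal_leI powr_mono2 enn2real_mono)
qed

lemma epow_epow: assumes "a > 0" "b > 0" shows "epow (epow x a) b = epow x (a * b)"
  using assms by (cases x) (auto simp: epow_def powr_powr)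


lemma young_pt:
  fixes u v a b \<rho> :: real
  assumes "0 \<le> u" "0 < v" "0 < a" "0 < b" "1 < \<rho>"
  shows "u \<le> a powr (1/\<rho>) * b powr (1 - 1/\<rho>) *
             (u powr \<rho> * v powr (1-\<rho>) / (\<rho>*a) + (1 - 1/\<rho>) * v / b)"
proof (cases "u = 0")
  case True then show ?thesis using assms by (auto intro!: mult_nonneg_nonneg add_nonneg_nonneg divide_nonneg_pos)
next
  case False
  then have u: "u > 0" using assms by auto
  define X where "X = u powr \<rho> * v powr (1-\<rho>) / a"
  define Y where "Y = v / b"
  have X: "X > 0" using u assms by (simp add: X_def)
  have Y: "Y > 0" using assms by (simp add: Y_def)
  have y: "X powr (1/\<rho>) * Y powr (1 - 1/\<rho>) \<le> (1/\<rho>) * X + (1 - 1/\<rho>) * Y"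
    using Youngs_inequality_0[of "1/\<rho>" "1 - 1/\<rho>" X Y] X Y assms by auto
  have "X powr (1/\<rho>) = u * v powr ((1-\<rho>)/\<rho>) / a powr (1/\<rho>)"
    using u assms by (simp add: X_def powr_divide powr_mult powr_powr)
  moreover have "Y powr (1 - 1/\<rho>) = v powr (1 - 1/\<rho>) / b powr (1 - 1/\<rho>)"
    using assms by (simp add: Y_def powr_divide)
  ultimately have "X powr (1/\<rho>) * Y powr (1 - 1/\<rho>) = u * (v powr ((1-\<rho>)/\<rho>) * v powr (1 - 1/\<rho>)) / (a powr (1/\<rho>) * b powr (1 - 1/\<rho>))"
    by simp
  also have "v powr ((1-\<rho>)/\<rho>) * v powr (1 - 1/\<rho>) = 1"
  proof -
    have "(1-\<rho>)/\<rho> + (1 - 1/\<rho>) = 0" using assms by (simp add: field_simps)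
    then show ?thesis using assms by (simp flip: powr_add)
  qed
  finally have eq: "X powr (1/\<rho>) * Y powr (1 - 1/\<rho>) = u / (a powr (1/\<rho>) * b powr (1 - 1/\<rho>))" by simp
  have pos: "a powr (1/\<rho>) * b powr (1 - 1/\<rho>) > 0" using assms by simp
  have "u = (a powr (1/\<rho>) * b powr (1 - 1/\<rho>)) * (X powr (1/\<rho>) * Y powr (1 - 1/\<rho>))"
    using pos assms by (simp add: eq)
  also have "\<dots> \<le> (a powr (1/\<rho>) * b powr (1 - 1/\<rho>)) * ((1/\<rho>) * X + (1 - 1/\<rho>) * Y)"
    using pos y by (intro mult_left_mono) auto
  also have "(1/\<rho>) * X + (1 - 1/\<rho>) * Y = u powr \<rho> * v powr (1-\<rho>) / (\<rho>*a) + (1 - 1/\<rho>) * v / b"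
    by (simp add: X_def Y_def)
  finally show ?thesis .
qed

lemma epow_one: "epow x 1 = x"
  by (cases x) (auto simp: epow_def)

lemma holder_w:
  fixes N :: "'a measure" and f w :: "'a \<Rightarrow> real" and \<rho> :: real
  assumes rho: "1 \<le> \<rho>" and [measurable]: "f \<in> borel_measurable N" "w \<in> borel_measurable N"
    and f0: "\<And>x. x \<in> space N \<Longrightarrow> 0 \<le> f x" and w0: "\<And>x. x \<in> space N \<Longrightarrow> 0 < w x"
    and Wfin: "(\<integral>\<^sup>+x. ennreal (w x) \<partial>N) < \<top>"
  shows "epow (\<integral>\<^sup>+x. ennreal (f x) \<partial>N) \<rho> \<le>
         (\<integral>\<^sup>+x. ennreal (f x powr \<rho> * w x powr (1-\<rho>)) \<partial>N) *
            ennreal (enn2real (\<integral>\<^sup>+x. ennreal (w x) \<partial>N) powr (\<rho> - 1))"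
proof -
  define W where "W = (\<integral>\<^sup>+x. ennreal (w x) \<partial>N)"
  define A where "A = (\<integral>\<^sup>+x. ennreal (f x powr \<rho> * w x powr (1-\<rho>)) \<partial>N)"
  define I where "I = (\<integral>\<^sup>+x. ennreal (f x) \<partial>N)"
  have rho0: "\<rho> > 0" using rho by auto
  show ?thesis
  proof (cases "W = 0")
    case True
    then have "AE x in N. ennreal (w x) = 0" unfolding W_def
      by (subst (asm) nn_integral_0_iff_AE) auto
    then have "AE x in N. False"
      by (rule AE_mp) (use w0 in \<open>force intro!: AE_I2 simp: ennreal_eq_0_iff\<close>)
    then have "I = 0" unfolding I_def
      by (intro nn_integral_0_iff_AE[THEN iffD2]) (auto elim: AE_mp)
    then show ?thesis using rho0 by (simp add: I_def)
  next
    case Wne: False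
    define b where "b = enn2real W"
    have Wb: "W = ennreal b" using Wfin unfolding b_def W_def by (simp add: less_top[symmetric] ennreal_enn2real)
    have b: "b > 0" using Wne Wb by (metis ennreal_0 enn2real_nonneg less_eq_real_def b_def)
    show ?thesis
    proof (cases "\<rho> = 1")
      case True
      have "A = I" unfolding A_def I_def using True f0 w0
        by (intro nn_integral_cong) (metis less_irrefl powr_one powr_zero_eq_one mult_1_right diff_self)
      then show ?thesis using True b by (simp add: epow_one A_def I_def W_def[symmetric] b_def[symmetric])
    next
      case False
      with rho have r1: "\<rho> > 1" by auto
      show ?thesis
      proof (cases "A = \<top>")
        case True
        then show ?thesis using b by (simp add: A_def[symmetric] W_def[symmetric] b_def[symmetric] ennreal_mult_top)
      next
        case Afin: False
        show ?thesis
        proof (cases "A = 0")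
          case True
          then have "AE x in N. ennreal (f x powr \<rho> * w x powr (1-\<rho>)) = 0" unfolding A_def
            by (subst (asm) nn_integral_0_iff_AE) auto
          moreover have "f x = 0" if "x \<in> space N" "f x powr \<rho> * w x powr (1-\<rho>) \<le> 0" for x
          proof -
            have "w x powr (1-\<rho>) > 0" using w0[OF that(1)] by simp
            then have "f x powr \<rho> \<le> 0" using that(2) by (simp add: mult_le_0_iff)
            then show ?thesis by (metis powr_eq_0_iff powr_ge_zero order_antisym rho0 less_irrefl)
          qed
          ultimately have "AE x in N. ennreal (f x) = 0"
          proof (elim AE_mp, intro AE_I2 impI)
            fix x assume H: "\<And>x. x \<in> space N \<Longrightarrow> f x powr \<rho> * w x powr (1-\<rho>) \<le> 0 \<Longrightarrow> f x = 0"
              and x: "x \<in> space N" and e: "ennreal (f x powr \<rho> * w x powr (1-\<rho>)) = 0"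
            from e have "f x powr \<rho> * w x powr (1-\<rho>) \<le> 0" by (simp add: ennreal_eq_0_iff)
            then show "ennreal (f x) = 0" using H[OF x] by simp
          qed
          then have "I = 0" unfolding I_def
            by (intro nn_integral_0_iff_AE[THEN iffD2]) (auto elim: AE_mp)
          then show ?thesis using rho0 by (simp add: I_def)
        next
          case Ane: False
          define a where "a = enn2real A"
          have Aa: "A = ennreal a" using Afin unfolding a_def by (simp add: less_top[symmetric] ennreal_enn2real)
          have a: "a > 0" using Ane Aa by (metis ennreal_0 enn2real_nonneg less_eq_real_def a_def)
          define K where "K = a powr (1/\<rho>) * b powr (1 - 1/\<rho>)"
          have K: "K > 0" using a b by (simp add: K_def)
          have "I \<le> (\<integral>\<^sup>+x. ennreal K * (ennreal (1/(\<rho>*a)) * ennreal (f x powr \<rho> * w x powr (1-\<rho>))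
                        + ennreal ((1 - 1/\<rho>)/b) * ennreal (w x)) \<partial>N)"
            unfolding I_def
          proof (intro nn_integral_mono)
            fix x assume x: "x \<in> space N"
            have "f x \<le> K * (f x powr \<rho> * w x powr (1-\<rho>) / (\<rho>*a) + (1 - 1/\<rho>) * w x / b)"
              unfolding K_def using young_pt[OF f0[OF x] w0[OF x] a b r1] .
            also have "\<dots> = K * ((1/(\<rho>*a)) * (f x powr \<rho> * w x powr (1-\<rho>)) + ((1 - 1/\<rho>)/b) * w x)"
              by simp
            finally have "ennreal (f x) \<le> ennreal (K * ((1/(\<rho>*a)) * (f x powr \<rho> * w x powr (1-\<rho>)) + ((1 - 1/\<rho>)/b) * w x))"
              by (rule ennreal_leI)
            also have "\<dots> = ennreal K * (ennreal (1/(\<rho>*a)) * ennreal (f x powr \<rho> * w x powr (1-\<rho>))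
                        + ennreal ((1 - 1/\<rho>)/b) * ennreal (w x))"
            proof -
              define g where "g = f x powr \<rho> * w x powr (1-\<rho>)"
              have g: "g \<ge> 0" by (simp add: g_def)
              have c1: "1/(\<rho>*a) \<ge> 0" "(1 - 1/\<rho>)/b \<ge> 0" using a b r1 by auto
              have "ennreal (K * ((1/(\<rho>*a)) * g + ((1 - 1/\<rho>)/b) * w x))
                  = ennreal K * ennreal ((1/(\<rho>*a)) * g + ((1 - 1/\<rho>)/b) * w x)"
                using K c1 g w0[OF x] by (intro ennreal_mult add_nonneg_nonneg mult_nonneg_nonneg) auto
              also have "ennreal ((1/(\<rho>*a)) * g + ((1 - 1/\<rho>)/b) * w x)
                  = ennreal ((1/(\<rho>*a)) * g) + ennreal (((1 - 1/\<rho>)/b) * w x)"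
                using c1 g less_imp_le[OF w0[OF x]] by (intro ennreal_plus mult_nonneg_nonneg) assumption+
              also have "ennreal ((1/(\<rho>*a)) * g) = ennreal (1/(\<rho>*a)) * ennreal g"
                using c1 g by (intro ennreal_mult) auto
              also have "ennreal (((1 - 1/\<rho>)/b) * w x) = ennreal ((1 - 1/\<rho>)/b) * ennreal (w x)"
                using c1 w0[OF x] by (intro ennreal_mult) auto
              finally show ?thesis by (simp add: g_def)
            qed
            finally show "ennreal (f x) \<le> \<dots>" .
          qed
          also have "\<dots> = ennreal K * (ennreal (1/(\<rho>*a)) * A + ennreal ((1 - 1/\<rho>)/b) * W)"
            unfolding A_def W_def
            by (simp add: nn_integral_cmult nn_integral_add)
          also have "\<dots> = ennreal K"
          proof -
            have e1: "ennreal (1/(\<rho>*a)) * ennreal a = ennreal (1/\<rho>)"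
              using a r1 by (simp add: ennreal_mult[symmetric])
            have e2: "ennreal ((1 - 1/\<rho>)/b) * ennreal b = ennreal (1 - 1/\<rho>)"
              using b r1 by (subst ennreal_mult[symmetric]) (auto simp: field_simps)
            have e3: "ennreal (1/\<rho>) + ennreal (1 - 1/\<rho>) = 1"
              using r1 by (subst ennreal_plus[symmetric]) auto
            show ?thesis by (simp only: Aa Wb e1 e2 e3 mult_1_right)
          qed
          finally have IK: "I \<le> ennreal K" by simp
          have "epow I \<rho> \<le> epow (ennreal K) \<rho>" by (rule epow_mono[OF rho0 IK])
          also have "\<dots> = ennreal (K powr \<rho>)" using K by (simp add: epow_ennreal)
          also have "K powr \<rho> = a * b powr (\<rho> - 1)"
          proof -
            have "(1 - 1/\<rho>) * \<rho> = \<rho> - 1" using r1 by (simp add: field_simps)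
            then show ?thesis using a b r1 by (simp add: K_def powr_mult powr_powr)
          qed
          finally have "epow I \<rho> \<le> A * ennreal (b powr (\<rho> - 1))" using a b by (simp add: Aa ennreal_mult)
          then show ?thesis by (simp only: A_def I_def W_def b_def)
        qed
      qed
    qed
  qed
qed


lemma upow: fixes u r :: real assumes "0 \<le> u" "0 < r" shows "u powr r \<le> (r / exp 1) powr r * exp u"
proof (cases "u = 0")
  case True
  have "0 \<le> (r / exp 1) powr r * exp u" by (intro mult_nonneg_nonneg) auto
  then show ?thesis using True assms by simp
next
  case False
  then have u: "u > 0" using assms by auto
  have "ln (u / r) \<le> u / r - 1" using u assms by (intro ln_le_minus_one) auto
  then have "r * ln (u / r) \<le> r * (u / r - 1)" using assms by (intro mult_left_mono) auto
  moreover have "ln (u / r) = ln u - ln r" using u assms by (simp add: ln_div)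
  moreover have "r * (u / r) = u" using assms by simp
  ultimately have "r * ln u \<le> r * (ln r - 1) + u" by (simp add: algebra_simps)
  then have "exp (r * ln u) \<le> exp (r * (ln r - 1) + u)" by simp
  also have "exp (r * (ln r - 1) + u) = (r / exp 1) powr r * exp u"
    using assms by (simp add: powr_def exp_add ln_div)
  finally show ?thesis using u by (simp add: powr_def)
qed

lemma mgf_sum:
  assumes P: "prob_space M" and ind: "prob_space.indep_vars M (\<lambda>_. borel) l UNIV"
   and mgf: "\<And>k \<gamma>. (\<integral>\<^sup>+ \<omega>. ennreal (exp (\<gamma> * l k \<omega>)) \<partial>M) \<le> ennreal (exp (c * \<gamma>^2))"
   and J: "finite J"
  shows "(\<integral>\<^sup>+\<omega>. ennreal (exp (g * (\<Sum>k\<in>J. l k \<omega> * \<beta> k))) \<partial>M) \<le> ennreal (exp (c * g^2 * (\<Sum>k\<in>J. (\<beta> k)^2)))"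
proof -
  interpret prob_space M by (rule P)
  have indJ: "indep_vars (\<lambda>_. borel) l J" using ind by (rule indep_vars_subset) auto
  have "(\<integral>\<^sup>+\<omega>. ennreal (exp (g * (\<Sum>k\<in>J. l k \<omega> * \<beta> k))) \<partial>M)
      = (\<integral>\<^sup>+\<omega>. (\<Prod>k\<in>J. ennreal (exp ((g * \<beta> k) * l k \<omega>))) \<partial>M)"
    by (intro nn_integral_cong)
       (simp add: sum_distrib_left exp_sum J prod_ennreal mult_ac)
  also have "\<dots> = (\<Prod>k\<in>J. \<integral>\<^sup>+\<omega>. ennreal (exp ((g * \<beta> k) * l k \<omega>)) \<partial>M)"
    by (intro indep_vars_nn_integral J indep_vars_compose2[OF indJ]) auto
  also have "\<dots> \<le> (\<Prod>k\<in>J. ennreal (exp (c * (g * \<beta> k)^2)))"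
    by (intro prod_mono_ennreal mgf)
  also have "\<dots> = ennreal (\<Prod>k\<in>J. exp (c * (g * \<beta> k)^2))"
    by (simp add: prod_ennreal)
  also have "(\<Prod>k\<in>J. exp (c * (g * \<beta> k)^2)) = exp (c * g^2 * (\<Sum>k\<in>J. (\<beta> k)^2))"
    by (simp add: exp_sum[OF J, symmetric] sum_distrib_left power_mult_distrib mult_ac)
  finally show ?thesis .
qed

lemma khin_real:
  assumes P: "prob_space M" and ind: "prob_space.indep_vars M (\<lambda>_. borel) l UNIV"
   and mgf: "\<And>k \<gamma>. (\<integral>\<^sup>+ \<omega>. ennreal (exp (\<gamma> * l k \<omega>)) \<partial>M) \<le> ennreal (exp (c * \<gamma>^2))"
   and J: "finite J" and r: "r > 0" and c: "c \<ge> 0"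
  shows "(\<integral>\<^sup>+\<omega>. ennreal (\<bar>\<Sum>k\<in>J. l k \<omega> * \<beta> k\<bar> powr r) \<partial>M)
           \<le> ennreal (2 * (exp c * sqrt r * sqrt (\<Sum>k\<in>J. (\<beta> k)^2)) powr r)"
proof -
  interpret prob_space M by (rule P)
  have [measurable]: "l k \<in> borel_measurable M" for k
    using ind unfolding indep_vars_def by auto
  define \<tau> where "\<tau> = sqrt (\<Sum>k\<in>J. (\<beta> k)^2)"
  have \<tau>0: "\<tau> \<ge> 0" by (simp add: \<tau>_def sum_nonneg)
  show ?thesis
  proof (cases "\<tau> = 0")
    case True
    then have "(\<Sum>k\<in>J. (\<beta> k)^2) = 0" unfolding \<tau>_def by simp
    then have "\<forall>k\<in>J. \<beta> k = 0" using J by (simp add: sum_nonneg_eq_0_iff)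
    then have "(\<Sum>k\<in>J. l k \<omega> * \<beta> k) = 0" for \<omega> by simp
    then show ?thesis using r by simp
  next
    case False
    then have \<tau>: "\<tau> > 0" using \<tau>0 by auto
    define g where "g = sqrt r / \<tau>"
    have g: "g > 0" using \<tau> r by (simp add: g_def)
    define Z where "Z \<omega> = (\<Sum>k\<in>J. l k \<omega> * \<beta> k)" for \<omega>
    have [measurable]: "Z \<in> borel_measurable M" unfolding Z_def by measurable
    have pt: "\<bar>Z \<omega>\<bar> powr r \<le> (r / (exp 1 * g)) powr r * (exp (g * Z \<omega>) + exp ((-g) * Z \<omega>))" for \<omega>
    proof -
      have "(g * \<bar>Z \<omega>\<bar>) powr r \<le> (r / exp 1) powr r * exp (g * \<bar>Z \<omega>\<bar>)"
        using g r by (intro upow) auto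
      also have "exp (g * \<bar>Z \<omega>\<bar>) \<le> exp (g * Z \<omega>) + exp ((-g) * Z \<omega>)"
        by (cases "Z \<omega> \<ge> 0") (auto simp: add_increasing add_increasing2)
      finally have "g powr r * \<bar>Z \<omega>\<bar> powr r \<le> (r / exp 1) powr r * (exp (g * Z \<omega>) + exp ((-g) * Z \<omega>))"
        using g by (simp add: powr_mult mult_left_mono)
      then have "\<bar>Z \<omega>\<bar> powr r \<le> (r / exp 1) powr r * (exp (g * Z \<omega>) + exp ((-g) * Z \<omega>)) / g powr r"
        using g by (simp add: field_simps)
      also have "\<dots> = (r / (exp 1 * g)) powr r * (exp (g * Z \<omega>) + exp ((-g) * Z \<omega>))"
        using g r by (simp add: powr_divide powr_mult field_simps)
      finally show ?thesis .
    qed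
    define D where "D = (r / (exp 1 * g)) powr r"
    have D: "D \<ge> 0" by (simp add: D_def)
    have "(\<integral>\<^sup>+\<omega>. ennreal (\<bar>Z \<omega>\<bar> powr r) \<partial>M)
        \<le> (\<integral>\<^sup>+\<omega>. ennreal D * (ennreal (exp (g * Z \<omega>)) + ennreal (exp ((-g) * Z \<omega>))) \<partial>M)"
      using pt D by (intro nn_integral_mono) (simp add: D_def ennreal_mult[symmetric] ennreal_plus[symmetric] ennreal_leI del: ennreal_plus)
    also have "\<dots> = ennreal D * ((\<integral>\<^sup>+\<omega>. ennreal (exp (g * Z \<omega>)) \<partial>M) + (\<integral>\<^sup>+\<omega>. ennreal (exp ((-g) * Z \<omega>)) \<partial>M))"
      by (simp add: nn_integral_cmult nn_integral_add)
    also have "\<dots> \<le> ennreal D * (ennreal (exp (c * g^2 * \<tau>^2)) + ennreal (exp (c * (-g)^2 * \<tau>^2)))"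
      unfolding Z_def \<tau>_def using mgf_sum[OF P ind mgf J, of g \<beta>] mgf_sum[OF P ind mgf J, of "-g" \<beta>]
      by (intro mult_left_mono add_mono) (auto simp: sum_nonneg)
    also have "\<dots> = ennreal (2 * D * exp (c * r))"
      using g \<tau> r D by (simp add: g_def ennreal_mult[symmetric] ennreal_plus[symmetric] power_divide del: ennreal_plus)
    also have "2 * D * exp (c * r) \<le> 2 * (exp c * sqrt r * \<tau>) powr r"
    proof -
      have "r / (exp 1 * g) = (sqrt r * sqrt r) * \<tau> / (exp 1 * sqrt r)"
        using r \<tau> by (simp add: g_def field_simps)
      also have "\<dots> = sqrt r * \<tau> / exp 1" using r by (simp add: field_simps)
      finally have "D = (sqrt r * \<tau> / exp 1) powr r" unfolding D_def by simp
      also have "\<dots> \<le> (sqrt r * \<tau>) powr r" using r \<tau>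
        by (intro powr_mono2) (auto simp: divide_le_eq mult_nonneg_nonneg)
      finally have "D * exp (c * r) \<le> (sqrt r * \<tau>) powr r * (exp c) powr r"
        using r by (simp add: powr_def exp_of_nat_mult mult_right_mono mult_ac)
      also have "\<dots> = (exp c * sqrt r * \<tau>) powr r" using \<tau> r by (simp add: powr_mult mult_ac)
      finally show ?thesis by simp
    qed
    finally show ?thesis unfolding Z_def \<tau>_def by (simp add: ennreal_leI)
  qed
qed


lemma sum_powr_le:
  fixes u :: "'i \<Rightarrow> real"
  assumes I: "finite I" and u: "\<And>i. i \<in> I \<Longrightarrow> 0 \<le> u i" and r: "r > 0"
  shows "(\<Sum>i\<in>I. u i) powr r \<le> real (card I) powr r * (\<Sum>i\<in>I. u i powr r)"
proof (cases "I = {}")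
  case True then show ?thesis by simp
next
  case False
  define m where "m = Max (u ` I)"
  have "m \<in> u ` I" unfolding m_def using I False by (intro Max_in) auto
  then obtain i0 where i0: "i0 \<in> I" "u i0 = m" by auto
  have um: "u i \<le> m" if "i \<in> I" for i unfolding m_def using I that by auto
  have m0: "0 \<le> m" using u i0 by auto
  have "(\<Sum>i\<in>I. u i) \<le> real (card I) * m" using sum_bounded_above[of I u m] um by auto
  then have "(\<Sum>i\<in>I. u i) powr r \<le> (real (card I) * m) powr r"
    using r u by (intro powr_mono2) (auto simp: sum_nonneg)
  also have "\<dots> = real (card I) powr r * m powr r" using m0 by (simp add: powr_mult)
  also have "m powr r \<le> (\<Sum>i\<in>I. u i powr r)"
    using i0 I by (metis member_le_sum powr_ge_zero)
  then have "real (card I) powr r * m powr r \<le> real (card I) powr r * (\<Sum>i\<in>I. u i powr r)"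
    by (intro mult_left_mono) auto
  finally show ?thesis .
qed

lemma norm_vec3_le:
  fixes z :: "complex^3"
  shows "norm z \<le> (\<Sum>i\<in>(UNIV::(3 \<times> bool) set). \<bar>(if snd i then Im (z $ fst i) else Re (z $ fst i))\<bar>)"
proof -
  have "norm z \<le> (\<Sum>j\<in>UNIV. norm (z $ j))" unfolding norm_vec_def by (rule L2_set_le_sum) auto
  also have "\<dots> \<le> (\<Sum>j\<in>UNIV. \<bar>Re (z $ j)\<bar> + \<bar>Im (z $ j)\<bar>)"
    by (intro sum_mono cmod_le)
  also have "\<dots> = (\<Sum>j\<in>UNIV. \<Sum>b\<in>(UNIV::bool set). \<bar>if b then Im (z $ j) else Re (z $ j)\<bar>)"
    by (simp add: UNIV_bool add.commute)
  also have "\<dots> = (\<Sum>i\<in>(UNIV \<times> UNIV). \<bar>(if snd i then Im (z $ fst i) else Re (z $ fst i))\<bar>)"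
    by (subst sum.cartesian_product') (simp only: fst_conv snd_conv)
  also have "(UNIV \<times> UNIV) = (UNIV::(3 \<times> bool) set)" by simp
  finally show ?thesis .
qed

lemma khin_vec:
  fixes v :: "int^3 \<Rightarrow> complex^3"
  assumes P: "prob_space M" and ind: "prob_space.indep_vars M (\<lambda>_. borel) l UNIV"
   and mgf: "\<And>k \<gamma>. (\<integral>\<^sup>+ \<omega>. ennreal (exp (\<gamma> * l k \<omega>)) \<partial>M) \<le> ennreal (exp (c * \<gamma>^2))"
   and J: "finite J" and r: "r \<ge> 1" and c: "c \<ge> 0"
  shows "(\<integral>\<^sup>+\<omega>. ennreal (norm (\<Sum>k\<in>J. l k \<omega> *\<^sub>R v k) powr r) \<partial>M)
           \<le> ennreal ((72 * exp c * sqrt r * sqrt (\<Sum>k\<in>J. (norm (v k))^2)) powr r)"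
proof -
  interpret prob_space M by (rule P)
  have [measurable]: "l k \<in> borel_measurable M" for k
    using ind unfolding indep_vars_def by auto
  define I where "I = (UNIV::(3 \<times> bool) set)"
  have cI: "card I = 6" unfolding I_def by (simp add: card_UNIV_bool)
  define \<beta> where "\<beta> i k = (if snd i then Im (v k $ fst i) else Re (v k $ fst i))" for i :: "3 \<times> bool" and k
  define Z where "Z i \<omega> = \<bar>\<Sum>k\<in>J. l k \<omega> * \<beta> i k\<bar>" for i \<omega>
  define \<sigma> where "\<sigma> = sqrt (\<Sum>k\<in>J. (norm (v k))^2)"
  have r0: "r > 0" using r by auto
  have comp: "(if snd i then Im ((\<Sum>k\<in>J. l k \<omega> *\<^sub>R v k) $ fst i) else Re ((\<Sum>k\<in>J. l k \<omega> *\<^sub>R v k) $ fst i))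
        = (\<Sum>k\<in>J. l k \<omega> * \<beta> i k)" for i \<omega>
    by (simp add: \<beta>_def sum_component Re_sum Im_sum)
  have pt: "norm (\<Sum>k\<in>J. l k \<omega> *\<^sub>R v k) powr r \<le> 6 powr r * (\<Sum>i\<in>I. Z i \<omega> powr r)" for \<omega>
  proof -
    have "norm (\<Sum>k\<in>J. l k \<omega> *\<^sub>R v k) \<le> (\<Sum>i\<in>I. Z i \<omega>)"
      using norm_vec3_le[of "\<Sum>k\<in>J. l k \<omega> *\<^sub>R v k"] unfolding I_def Z_def comp .
    then have "norm (\<Sum>k\<in>J. l k \<omega> *\<^sub>R v k) powr r \<le> (\<Sum>i\<in>I. Z i \<omega>) powr r"
      using r0 by (intro powr_mono2) auto
    also have "\<dots> \<le> real (card I) powr r * (\<Sum>i\<in>I. Z i \<omega> powr r)"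
      using r0 by (intro sum_powr_le) (auto simp: I_def Z_def)
    finally show ?thesis by (simp add: cI)
  qed
  have \<tau>: "sqrt (\<Sum>k\<in>J. (\<beta> i k)^2) \<le> \<sigma>" for i
    unfolding \<sigma>_def
  proof (intro real_sqrt_le_mono sum_mono)
    fix k
    have "\<bar>\<beta> i k\<bar> \<le> norm (v k $ fst i)" by (auto simp: \<beta>_def abs_Re_le_cmod abs_Im_le_cmod)
    also have "\<dots> \<le> norm (v k)" by (rule Finite_Cartesian_Product.norm_nth_le)
    finally show "(\<beta> i k)^2 \<le> (norm (v k))^2"
      by (metis abs_ge_zero power2_abs power_mono)
  qed
  have "(\<integral>\<^sup>+\<omega>. ennreal (norm (\<Sum>k\<in>J. l k \<omega> *\<^sub>R v k) powr r) \<partial>M)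
      \<le> (\<integral>\<^sup>+\<omega>. ennreal (6 powr r) * (\<Sum>i\<in>I. ennreal (Z i \<omega> powr r)) \<partial>M)"
  proof (intro nn_integral_mono)
    fix \<omega>
    have "ennreal (norm (\<Sum>k\<in>J. l k \<omega> *\<^sub>R v k) powr r) \<le> ennreal (6 powr r * (\<Sum>i\<in>I. Z i \<omega> powr r))"
      by (rule ennreal_leI[OF pt])
    also have "\<dots> = ennreal (6 powr r) * (\<Sum>i\<in>I. ennreal (Z i \<omega> powr r))"
      by (subst ennreal_mult) (auto simp: sum_nonneg sum_ennreal)
    finally show "ennreal (norm (\<Sum>k\<in>J. l k \<omega> *\<^sub>R v k) powr r) \<le> \<dots>" .
  qed
  also have "\<dots> = ennreal (6 powr r) * (\<Sum>i\<in>I. (\<integral>\<^sup>+\<omega>. ennreal (Z i \<omega> powr r) \<partial>M))"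
  proof -
    have m: "(\<lambda>\<omega>. ennreal (Z i \<omega> powr r)) \<in> borel_measurable M" for i unfolding Z_def by measurable
    have "(\<integral>\<^sup>+\<omega>. ennreal (6 powr r) * (\<Sum>i\<in>I. ennreal (Z i \<omega> powr r)) \<partial>M)
        = ennreal (6 powr r) * (\<integral>\<^sup>+\<omega>. (\<Sum>i\<in>I. ennreal (Z i \<omega> powr r)) \<partial>M)"
      using m by (intro nn_integral_cmult) auto
    also have "(\<integral>\<^sup>+\<omega>. (\<Sum>i\<in>I. ennreal (Z i \<omega> powr r)) \<partial>M) = (\<Sum>i\<in>I. \<integral>\<^sup>+\<omega>. ennreal (Z i \<omega> powr r) \<partial>M)"
      using m by (intro nn_integral_sum) auto
    finally show ?thesis .
  qed
  also have "\<dots> \<le> ennreal (6 powr r) * (\<Sum>i\<in>I. ennreal (2 * (exp c * sqrt r * \<sigma>) powr r))"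
  proof (intro mult_left_mono sum_mono)
    fix i
    have "(\<integral>\<^sup>+\<omega>. ennreal (Z i \<omega> powr r) \<partial>M) \<le> ennreal (2 * (exp c * sqrt r * sqrt (\<Sum>k\<in>J. (\<beta> i k)^2)) powr r)"
      unfolding Z_def by (rule khin_real[OF P ind mgf J r0 c])
    also have "\<dots> \<le> ennreal (2 * (exp c * sqrt r * \<sigma>) powr r)"
      using \<tau>[of i] r0 by (intro ennreal_leI mult_left_mono powr_mono2 mult_left_mono) (auto intro!: mult_nonneg_nonneg sum_nonneg)
    finally show "(\<integral>\<^sup>+\<omega>. ennreal (Z i \<omega> powr r) \<partial>M) \<le> ennreal (2 * (exp c * sqrt r * \<sigma>) powr r)" .
  qed auto
  also have "\<dots> = ennreal (12 * 6 powr r * (exp c * sqrt r * \<sigma>) powr r)"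
  proof -
    define X where "X = (exp c * sqrt r * \<sigma>) powr r"
    have X: "X \<ge> 0" by (simp add: X_def)
    have "(\<Sum>i\<in>I. ennreal (2 * X)) = of_nat 6 * ennreal (2 * X)" by (simp only: sum_constant cI)
    also have "\<dots> = ennreal (6 * (2 * X))" using X by (simp add: ennreal_mult ennreal_of_nat_eq_real_of_nat)
    also have "ennreal (6 powr r) * \<dots> = ennreal (6 powr r * (6 * (2 * X)))"
      using X by (simp add: ennreal_mult)
    finally show ?thesis unfolding X_def by (simp add: mult_ac)
  qed
  also have "12 * 6 powr r * (exp c * sqrt r * \<sigma>) powr r \<le> (72 * exp c * sqrt r * \<sigma>) powr r"
  proof -
    have "12 \<le> (12::real) powr r" using r by (metis powr_one_gt_zero_iff powr_mono one_le_numeral zero_le_numeral)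
    then have "12 * 6 powr r * (exp c * sqrt r * \<sigma>) powr r \<le> 12 powr r * 6 powr r * (exp c * sqrt r * \<sigma>) powr r"
      by (intro mult_right_mono) (auto)
    also have "\<dots> = (72 * exp c * sqrt r * \<sigma>) powr r"
      using r0 by (simp add: powr_mult[symmetric] \<sigma>_def mult_ac)
    finally show ?thesis .
  qed
  finally show ?thesis unfolding \<sigma>_def by (simp add: ennreal_leI)
qed


lemma exp_int_bound:
  assumes "\<mu> > 0"
  shows "(\<integral>\<^sup>+t. ennreal (exp (-\<mu>*t)) * indicator {0<..<T} t \<partial>lborel) \<le> ennreal (1/\<mu>)"
proof -
  have "(\<integral>\<^sup>+t. ennreal (exp (-\<mu>*t)) * indicator {0<..<T} t \<partial>lborel)
      \<le> (\<integral>\<^sup>+t. ennreal (1/\<mu>) * (ennreal (erlang_density 0 \<mu> t) * indicator {..T} t) \<partial>lborel)"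
    using assms by (intro nn_integral_mono)
      (auto simp: exponential_density_def ennreal_mult[symmetric] mult_ac split: split_indicator)
  also have "\<dots> = ennreal (1/\<mu>) * (\<integral>\<^sup>+t. ennreal (erlang_density 0 \<mu> t) * indicator {..T} t \<partial>lborel)"
    by (intro nn_integral_cmult) auto
  also have "\<dots> = ennreal (1/\<mu>) * ennreal (erlang_CDF 0 \<mu> T)"
    using assms by (simp add: nn_integral_erlang_density)
  also have "\<dots> \<le> ennreal (1/\<mu>) * 1"
    using assms by (intro mult_left_mono) (auto simp: erlang_CDF_0)
  finally show ?thesis by simp
qed

lemma pow_exp_int_bound:
  assumes b: "\<beta> > 0" and m: "\<mu> > 0"
  shows "(\<integral>\<^sup>+t. ennreal (t powr \<beta> * exp (-\<mu>*t)) * indicator {0<..<T} t \<partial>lborel)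
           \<le> ennreal ((2*\<beta>/(exp 1 * \<mu>)) powr \<beta> * (2/\<mu>))"
proof -
  define C where "C = (2*\<beta>/(exp 1 * \<mu>)) powr \<beta>"
  have C: "C \<ge> 0" by (simp add: C_def)
  have pt: "t powr \<beta> * exp (-\<mu>*t) \<le> C * exp (-(\<mu>/2)*t)" if "t > 0" for t
  proof -
    have "(\<mu>*t/2) powr \<beta> \<le> (\<beta>/exp 1) powr \<beta> * exp (\<mu>*t/2)"
      using that m b by (intro upow) auto
    moreover have "(\<mu>*t/2) powr \<beta> = (\<mu>/2) powr \<beta> * t powr \<beta>"
      using that m by (simp add: powr_mult[symmetric])
    ultimately have "t powr \<beta> \<le> (\<beta>/exp 1) powr \<beta> * exp (\<mu>*t/2) / (\<mu>/2) powr \<beta>"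
      using m by (simp add: field_simps)
    also have "\<dots> = C * exp (\<mu>*t/2)"
      using m b by (simp add: C_def powr_divide powr_mult field_simps)
    finally have "t powr \<beta> * exp (-\<mu>*t) \<le> C * exp (\<mu>*t/2) * exp (-\<mu>*t)"
      by (intro mult_right_mono) auto
    also have "\<dots> = C * exp (-(\<mu>/2)*t)"
    proof -
      have "exp (\<mu>*t/2) * exp (-\<mu>*t) = exp (-(\<mu>/2)*t)" by (simp add: mult_exp_exp)
      then show ?thesis by (simp only: mult.assoc)
    qed
    finally show ?thesis .
  qed
  have "(\<integral>\<^sup>+t. ennreal (t powr \<beta> * exp (-\<mu>*t)) * indicator {0<..<T} t \<partial>lborel)
      \<le> (\<integral>\<^sup>+t. ennreal C * (ennreal (exp (-(\<mu>/2)*t)) * indicator {0<..<T} t) \<partial>lborel)"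
    using pt C by (intro nn_integral_mono) (auto simp: ennreal_mult[symmetric] ennreal_leI split: split_indicator)
  also have "\<dots> = ennreal C * (\<integral>\<^sup>+t. ennreal (exp (-(\<mu>/2)*t)) * indicator {0<..<T} t \<partial>lborel)"
    by (intro nn_integral_cmult) auto
  also have "\<dots> \<le> ennreal C * ennreal (1/(\<mu>/2))"
    using m by (intro mult_left_mono exp_int_bound) auto
  finally show ?thesis using C m by (simp add: C_def ennreal_mult[symmetric])
qed

lemma ksq_nonneg: "ksq k \<ge> 0"
  by (simp add: ksq_def sum_nonneg)

lemma ksq_ge1: assumes "k \<noteq> 0" shows "ksq k \<ge> 1"
proof -
  obtain i where i: "k $ i \<noteq> 0" using assms by (metis vec_eq_iff zero_index)
  then have "1 \<le> (real_of_int (k $ i))^2"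
    by (metis of_int_0_eq_iff of_int_1_le_iff of_int_power one_le_power zero_less_abs_iff abs_square_eq_1 power2_abs
        int_one_le_iff_zero_less less_one not_le one_le_power le_square)
  also have "\<dots> \<le> ksq k" unfolding ksq_def by (rule member_le_sum) auto
  finally show ?thesis .
qed


definition C1c :: "real \<Rightarrow> real \<Rightarrow> real \<Rightarrow> real \<Rightarrow> real" where
  "C1c \<alpha> \<eta> q T = max (T powr (\<eta>*q+1))
      ((2*(\<eta>*q)/exp 1) powr (\<eta>*q) * 2 * q powr (-(\<eta>*q+1)) * 2 powr (\<alpha>*(\<eta>*q+1)))"

lemma C1c_pos: "T > 0 \<Longrightarrow> C1c \<alpha> \<eta> q T > 0"
  unfolding C1c_def by (simp add: less_max_iff_disj)

lemma Ik_bound: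
  assumes a: "\<alpha> > 0" and e: "\<eta> > 0" and q: "q > 0" and T: "T > 0"
  shows "(\<integral>\<^sup>+t. ennreal (t powr (\<eta>*q) * exp (-(q * ksq k powr \<alpha>) * t)) * indicator {0<..<T} t \<partial>lborel)
          \<le> ennreal (C1c \<alpha> \<eta> q T * (1 + ksq k) powr (-(\<alpha>*(\<eta>*q+1))))"
proof (cases "k = 0")
  case True
  have ks: "ksq k = 0" using True by (simp add: ksq_def)
  have "(\<integral>\<^sup>+t. ennreal (t powr (\<eta>*q) * exp (-(q * ksq k powr \<alpha>) * t)) * indicator {0<..<T} t \<partial>lborel)
      \<le> (\<integral>\<^sup>+t. ennreal (T powr (\<eta>*q)) * indicator {0<..<T} t \<partial>lborel)"
    using a e q by (intro nn_integral_mono) (auto simp: ks split: split_indicator intro!: ennreal_leI powr_mono2)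
  also have "\<dots> = ennreal (T powr (\<eta>*q)) * ennreal T" using T by (subst nn_integral_cmult_indicator) auto
  also have "\<dots> = ennreal (T powr (\<eta>*q+1))" using T by (simp add: powr_add ennreal_mult[symmetric])
  also have "\<dots> \<le> ennreal (C1c \<alpha> \<eta> q T * (1 + ksq k) powr (-(\<alpha>*(\<eta>*q+1))))"
    by (simp add: ks C1c_def ennreal_leI)
  finally show ?thesis .
next
  case False
  have k1: "ksq k \<ge> 1" by (rule ksq_ge1[OF False])
  define L where "L = ksq k powr \<alpha>"
  have L1: "L \<ge> 1" unfolding L_def using k1 a by (simp add: ge_one_powr_ge_zero)
  define \<beta> where "\<beta> = \<eta>*q"
  have b: "\<beta> > 0" using e q by (simp add: \<beta>_def)
  have mu: "q * L > 0" using q L1 by simp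
  have "(\<integral>\<^sup>+t. ennreal (t powr (\<eta>*q) * exp (-(q * ksq k powr \<alpha>) * t)) * indicator {0<..<T} t \<partial>lborel)
      \<le> ennreal ((2*\<beta>/(exp 1 * (q*L))) powr \<beta> * (2/(q*L)))"
    unfolding \<beta>_def[symmetric] L_def[symmetric] by (rule pow_exp_int_bound[OF b mu])
  also have "\<dots> \<le> ennreal (C1c \<alpha> \<eta> q T * (1 + ksq k) powr (-(\<alpha>*(\<eta>*q+1))))"
  proof (rule ennreal_leI)
  have "(2*\<beta>/(exp 1 * (q*L))) powr \<beta> * (2/(q*L))
           = (2*\<beta>/exp 1) powr \<beta> * 2 * q powr (-(\<beta>+1)) * L powr (-(\<beta>+1))"
  proof -
    define P where "P = (q*L) powr \<beta>"
    define X where "X = (2*\<beta>/exp 1) powr \<beta>"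
    have P: "P > 0" using q L1 by (simp add: P_def)
    have h1: "(2*\<beta>/(exp 1 * (q*L))) powr \<beta> = X / P"
      using b q L1 by (simp add: powr_divide powr_mult P_def X_def)
    have "(q*L) powr (-(\<beta>+1)) = 1 / (P * (q*L))"
      using mu unfolding P_def by (subst powr_minus_divide) (simp add: powr_add)
    moreover have "(q*L) powr (-(\<beta>+1)) = q powr (-(\<beta>+1)) * L powr (-(\<beta>+1))"
      using q L1 by (simp add: powr_mult)
    ultimately have h2: "q powr (-(\<beta>+1)) * L powr (-(\<beta>+1)) = 1 / (P * (q*L))" by simp
    have "X / P * (2/(q*L)) = X * 2 * (1 / (P * (q*L)))" using P mu by (simp add: field_simps)
    also have "\<dots> = X * 2 * (q powr (-(\<beta>+1)) * L powr (-(\<beta>+1)))" by (simp only: h2)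
    finally show ?thesis by (simp only: h1 X_def mult.assoc)
  qed
  also have "L powr (-(\<beta>+1)) \<le> 2 powr (\<alpha>*(\<beta>+1)) * (1 + ksq k) powr (-(\<alpha>*(\<beta>+1)))"
  proof -
    have "L powr (-(\<beta>+1)) = ksq k powr (-(\<alpha>*(\<beta>+1)))"
      unfolding L_def by (simp add: powr_powr algebra_simps)
    also have "\<dots> \<le> ((1 + ksq k)/2) powr (-(\<alpha>*(\<beta>+1)))"
      using k1 a b by (intro powr_mono2') (auto intro: mult_nonneg_nonneg)
    also have "\<dots> = 2 powr (\<alpha>*(\<beta>+1)) * (1 + ksq k) powr (-(\<alpha>*(\<beta>+1)))"
    proof -
      have "((1 + ksq k)/2) powr (-(\<alpha>*(\<beta>+1))) = (1 + ksq k) powr (-(\<alpha>*(\<beta>+1))) / 2 powr (-(\<alpha>*(\<beta>+1)))"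
        by (rule powr_divide)
      also have "2 powr (-(\<alpha>*(\<beta>+1))) = 1 / 2 powr (\<alpha>*(\<beta>+1))" by (rule powr_minus_divide)
      finally show ?thesis by simp
    qed
    finally show ?thesis .
  qed
  then have "(2*\<beta>/exp 1) powr \<beta> * 2 * q powr (-(\<beta>+1)) * L powr (-(\<beta>+1))
      \<le> (2*\<beta>/exp 1) powr \<beta> * 2 * q powr (-(\<beta>+1)) * (2 powr (\<alpha>*(\<beta>+1)) * (1 + ksq k) powr (-(\<alpha>*(\<beta>+1))))"
    by (intro mult_left_mono) auto
  also have "\<dots> \<le> C1c \<alpha> \<eta> q T * (1 + ksq k) powr (-(\<alpha>*(\<eta>*q+1)))"
    unfolding C1c_def \<beta>_def mult.assoc[symmetric, of _ "2 powr _"] by (intro mult_right_mono) auto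
  finally show "(2*\<beta>/(exp 1 * (q*L))) powr \<beta> * (2/(q*L)) \<le> C1c \<alpha> \<eta> q T * (1 + ksq k) powr (-(\<alpha>*(\<eta>*q+1)))" .
  qed
  finally show ?thesis .
qed


lemma holder_sum:
  fixes b lam :: "'k \<Rightarrow> real"
  assumes A: "finite A" and b: "\<And>k. k \<in> A \<Longrightarrow> 0 \<le> b k" and l: "\<And>k. k \<in> A \<Longrightarrow> 0 < lam k" and r: "1 \<le> \<rho>"
  shows "(\<Sum>k\<in>A. b k) powr \<rho> \<le> (\<Sum>k\<in>A. b k powr \<rho> * lam k powr (1-\<rho>)) * (\<Sum>k\<in>A. lam k) powr (\<rho> - 1)"
proof -
  have "epow (\<integral>\<^sup>+k. ennreal (b k) \<partial>count_space A) \<rho> \<le>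
         (\<integral>\<^sup>+k. ennreal (b k powr \<rho> * lam k powr (1-\<rho>)) \<partial>count_space A) *
            ennreal (enn2real (\<integral>\<^sup>+k. ennreal (lam k) \<partial>count_space A) powr (\<rho> - 1))"
    using A b l r by (intro holder_w) (auto simp: nn_integral_count_space_finite)
  moreover have "(\<integral>\<^sup>+k. ennreal (b k) \<partial>count_space A) = ennreal (\<Sum>k\<in>A. b k)"
    using A b by (simp add: nn_integral_count_space_finite sum_ennreal)
  moreover have "(\<integral>\<^sup>+k. ennreal (b k powr \<rho> * lam k powr (1-\<rho>)) \<partial>count_space A) = ennreal (\<Sum>k\<in>A. b k powr \<rho> * lam k powr (1-\<rho>))"
    using A by (simp add: nn_integral_count_space_finite sum_ennreal)
  moreover have "(\<integral>\<^sup>+k. ennreal (lam k) \<partial>count_space A) = ennreal (\<Sum>k\<in>A. lam k)"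
    using A l by (simp add: nn_integral_count_space_finite sum_ennreal less_imp_le)
  ultimately have "ennreal ((\<Sum>k\<in>A. b k) powr \<rho>) \<le> ennreal ((\<Sum>k\<in>A. b k powr \<rho> * lam k powr (1-\<rho>)) * (\<Sum>k\<in>A. lam k) powr (\<rho> - 1))"
    using A b l by (simp add: epow_ennreal sum_nonneg less_imp_le ennreal_mult)
  moreover have "0 \<le> (\<Sum>k\<in>A. b k powr \<rho> * lam k powr (1-\<rho>)) * (\<Sum>k\<in>A. lam k) powr (\<rho> - 1)"
    by (intro mult_nonneg_nonneg sum_nonneg) auto
  ultimately show ?thesis by (simp add: ennreal_le_iff)
qed


definition sig2 :: "real \<Rightarrow> (int^3 \<Rightarrow> complex^3) \<Rightarrow> (int^3) set \<Rightarrow> real \<Rightarrow> real" where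
  "sig2 \<alpha> a J t = (\<Sum>k\<in>J. (exp (-t * ksq k powr \<alpha>))^2 * (norm (a k))^2)"

definition Hsum :: "real \<Rightarrow> (int^3 \<Rightarrow> complex^3) \<Rightarrow> real" where
  "Hsum s a = (\<Sum>\<^sub>\<infinity>k. (1 + ksq k) powr s * (norm (a k))^2)"

lemma sig2_nonneg: "sig2 \<alpha> a J t \<ge> 0"
  by (simp add: sig2_def sum_nonneg)

lemma exp_powr_real: fixes x y :: real shows "exp x powr y = exp (x * y)"
  by (simp add: powr_def mult.commute)

lemma term_id:
  fixes x n K \<rho> s :: real
  assumes n: "n > 0" and K: "K \<ge> 1"
  shows "((exp x)^2 * n^2) powr \<rho> * (K powr s * n^2) powr (1 - \<rho>) = exp (x * (2*\<rho>)) * (n^2 * K powr (s * (1-\<rho>)))"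
proof -
  have "((exp x)^2 * n^2) powr \<rho> = exp (x * (2*\<rho>)) * n powr (2*\<rho>)"
    using n by (simp add: powr_mult powr_powr exp_powr_real flip: powr_numeral)
  moreover have "(K powr s * n^2) powr (1 - \<rho>) = K powr (s * (1-\<rho>)) * n powr (2*(1-\<rho>))"
    using n K by (simp add: powr_mult powr_powr flip: powr_numeral)
  moreover have "n powr (2*\<rho>) * n powr (2*(1-\<rho>)) = n^2"
    using n by (simp add: powr_add[symmetric] algebra_simps flip: powr_numeral)
  ultimately show ?thesis by (simp add: mult_ac)
qed

lemma W_bound:
  fixes a :: "int^3 \<Rightarrow> complex^3"
  assumes a: "\<alpha> > 0" and e: "\<eta> > 0" and q: "q \<ge> 2" and T: "T > 0"
    and s: "s \<ge> - 2 * \<alpha> * \<eta> - 2 * \<alpha> / q" and J: "finite J" and H: "in_Hs s a"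
  shows "(\<integral>\<^sup>+t. ennreal (t powr (\<eta>*q) * sig2 \<alpha> a J t powr (q/2)) * indicator {0<..<T} t \<partial>lborel)
           \<le> ennreal (C1c \<alpha> \<eta> q T * Hsum s a powr (q/2))"
proof -
  define J' where "J' = {k\<in>J. a k \<noteq> 0}"
  have J': "finite J'" "J' \<subseteq> J" using J by (auto simp: J'_def)
  define \<rho> where "\<rho> = q/2"
  have r1: "\<rho> \<ge> 1" using q by (simp add: \<rho>_def)
  define lam where "lam k = (1 + ksq k) powr s * (norm (a k))^2" for k
  have lam: "lam k > 0" if "k \<in> J'" for k using that ksq_nonneg[of k] by (auto simp: lam_def J'_def)
  define Lam where "Lam = (\<Sum>k\<in>J'. lam k)"
  have Lam0: "Lam \<ge> 0" unfolding Lam_def using lam by (auto intro: sum_nonneg less_imp_le)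
  have LamH: "Lam \<le> Hsum s a"
    unfolding Lam_def Hsum_def lam_def
    using H J' by (intro finite_sum_le_infsum) (auto simp: in_Hs_def)
  define L where "L k = ksq k powr \<alpha>" for k
  define c where "c k = (norm (a k))^2 * (1 + ksq k) powr (s * (1-\<rho>))" for k
  have c0: "c k \<ge> 0" for k by (simp add: c_def)
  define g where "g k t = t powr (\<eta>*q) * exp (-(q * ksq k powr \<alpha>) * t)" for k t
  have sigJ': "sig2 \<alpha> a J t = (\<Sum>k\<in>J'. (exp (-t * L k))^2 * (norm (a k))^2)" for t
    unfolding sig2_def L_def using J by (intro sum.mono_neutral_right) (auto simp: J'_def)
  have pt: "t powr (\<eta>*q) * sig2 \<alpha> a J t powr \<rho> \<le> (\<Sum>k\<in>J'. Lam powr (\<rho>-1) * c k * g k t)" for t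
  proof -
    have "sig2 \<alpha> a J t powr \<rho> \<le> (\<Sum>k\<in>J'. ((exp (-t * L k))^2 * (norm (a k))^2) powr \<rho> * lam k powr (1-\<rho>)) * Lam powr (\<rho> - 1)"
      unfolding sigJ' Lam_def using J' lam r1 by (intro holder_sum) auto
    also have "(\<Sum>k\<in>J'. ((exp (-t * L k))^2 * (norm (a k))^2) powr \<rho> * lam k powr (1-\<rho>))
             = (\<Sum>k\<in>J'. c k * exp (-(q * ksq k powr \<alpha>) * t))"
    proof (intro sum.cong refl)
      fix k assume k: "k \<in> J'"
      have n: "norm (a k) > 0" using k by (auto simp: J'_def)
      have "((exp (-t * L k))^2 * (norm (a k))^2) powr \<rho> * lam k powr (1-\<rho>)
          = exp ((-t * L k) * (2*\<rho>)) * ((norm (a k))^2 * (1 + ksq k) powr (s * (1-\<rho>)))"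
        unfolding lam_def by (rule term_id[OF n]) (simp add: ksq_nonneg)
      also have "\<dots> = c k * exp (-(q * ksq k powr \<alpha>) * t)"
        by (simp add: c_def L_def \<rho>_def mult_ac)
      finally show "((exp (-t * L k))^2 * (norm (a k))^2) powr \<rho> * lam k powr (1-\<rho>) = c k * exp (-(q * ksq k powr \<alpha>) * t)" .
    qed
    finally have "sig2 \<alpha> a J t powr \<rho> \<le> (\<Sum>k\<in>J'. c k * exp (-(q * ksq k powr \<alpha>) * t)) * Lam powr (\<rho> - 1)" .
    then have "t powr (\<eta>*q) * sig2 \<alpha> a J t powr \<rho> \<le> t powr (\<eta>*q) * ((\<Sum>k\<in>J'. c k * exp (-(q * ksq k powr \<alpha>) * t)) * Lam powr (\<rho> - 1))"
      by (intro mult_left_mono) auto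
    also have "\<dots> = (\<Sum>k\<in>J'. Lam powr (\<rho>-1) * c k * g k t)"
      by (simp add: g_def sum_distrib_left sum_distrib_right mult_ac)
    finally show ?thesis .
  qed
  have "(\<integral>\<^sup>+t. ennreal (t powr (\<eta>*q) * sig2 \<alpha> a J t powr (q/2)) * indicator {0<..<T} t \<partial>lborel)
      \<le> (\<integral>\<^sup>+t. (\<Sum>k\<in>J'. ennreal (Lam powr (\<rho>-1) * c k) * (ennreal (g k t) * indicator {0<..<T} t)) \<partial>lborel)"
  proof (intro nn_integral_mono)
    fix t
    have "ennreal (t powr (\<eta>*q) * sig2 \<alpha> a J t powr (q/2)) \<le> ennreal (\<Sum>k\<in>J'. Lam powr (\<rho>-1) * c k * g k t)"
      using pt[of t] unfolding \<rho>_def by (rule ennreal_leI)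
    also have "\<dots> = (\<Sum>k\<in>J'. ennreal (Lam powr (\<rho>-1) * c k) * ennreal (g k t))"
      using c0 by (simp add: g_def ennreal_mult sum_ennreal[symmetric] mult_nonneg_nonneg sum_nonneg del: sum_ennreal)
    finally show "ennreal (t powr (\<eta>*q) * sig2 \<alpha> a J t powr (q/2)) * indicator {0<..<T} t
        \<le> (\<Sum>k\<in>J'. ennreal (Lam powr (\<rho>-1) * c k) * (ennreal (g k t) * indicator {0<..<T} t))"
      by (auto simp: sum_distrib_right mult_ac split: split_indicator)
  qed
  also have "\<dots> = (\<Sum>k\<in>J'. ennreal (Lam powr (\<rho>-1) * c k) * (\<integral>\<^sup>+t. ennreal (g k t) * indicator {0<..<T} t \<partial>lborel))"
    by (simp add: g_def nn_integral_sum nn_integral_cmult)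
  also have "\<dots> \<le> (\<Sum>k\<in>J'. ennreal (Lam powr (\<rho>-1) * c k) * ennreal (C1c \<alpha> \<eta> q T * (1 + ksq k) powr (-(\<alpha>*(\<eta>*q+1)))))"
    unfolding g_def using a e q T by (intro sum_mono mult_left_mono Ik_bound) auto
  also have "\<dots> = ennreal (\<Sum>k\<in>J'. Lam powr (\<rho>-1) * C1c \<alpha> \<eta> q T * (c k * (1 + ksq k) powr (-(\<alpha>*(\<eta>*q+1)))))"
    using c0 C1c_pos[OF T, of \<alpha> \<eta> q]
    by (simp add: ennreal_mult[symmetric] sum_ennreal mult_nonneg_nonneg mult_ac)
  also have "\<dots> \<le> ennreal (\<Sum>k\<in>J'. Lam powr (\<rho>-1) * C1c \<alpha> \<eta> q T * lam k)"
  proof (intro ennreal_leI sum_mono mult_left_mono)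
    fix k assume "k \<in> J'"
    have "(1 + ksq k) powr (s * (1-\<rho>)) * (1 + ksq k) powr (-(\<alpha>*(\<eta>*q+1))) = (1 + ksq k) powr (s * (1-\<rho>) - \<alpha>*(\<eta>*q+1))"
      by (simp add: powr_add[symmetric])
    also have "\<dots> \<le> (1 + ksq k) powr s"
    proof (rule powr_mono)
      have "s * \<rho> \<ge> -(\<alpha>*(\<eta>*q+1))"
      proof -
        have "s * \<rho> \<ge> (- 2 * \<alpha> * \<eta> - 2 * \<alpha> / q) * \<rho>" using s r1 by (intro mult_right_mono) auto
        also have "(- 2 * \<alpha> * \<eta> - 2 * \<alpha> / q) * \<rho> = -(\<alpha>*(\<eta>*q+1))" using q by (simp add: \<rho>_def field_simps)
        finally show ?thesis .
      qed
      then show "s * (1-\<rho>) - \<alpha>*(\<eta>*q+1) \<le> s" by (simp add: algebra_simps)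
      show "1 \<le> 1 + ksq k" by (simp add: ksq_nonneg)
    qed
    finally have "(norm (a k))^2 * ((1 + ksq k) powr (s * (1-\<rho>)) * (1 + ksq k) powr (-(\<alpha>*(\<eta>*q+1))))
        \<le> (norm (a k))^2 * (1 + ksq k) powr s"
      by (rule mult_left_mono) simp
    then show "c k * (1 + ksq k) powr (-(\<alpha>*(\<eta>*q+1))) \<le> lam k"
      unfolding c_def lam_def by (simp add: mult_ac)
  qed (use C1c_pos[OF T, of \<alpha> \<eta> q] in auto)
  also have "(\<Sum>k\<in>J'. Lam powr (\<rho>-1) * C1c \<alpha> \<eta> q T * lam k) = C1c \<alpha> \<eta> q T * (Lam powr (\<rho>-1) * Lam)"
    by (simp add: Lam_def sum_distrib_right[symmetric] mult_ac)
  also have "Lam powr (\<rho>-1) * Lam \<le> Hsum s a powr (q/2)"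
  proof (cases "Lam = 0")
    case True then show ?thesis by simp
  next
    case False
    then have "Lam powr (\<rho>-1) * Lam = Lam powr \<rho>" using Lam0 by (simp add: powr_add[symmetric] powr_diff)
    also have "\<dots> \<le> Hsum s a powr \<rho>" using LamH Lam0 r1 by (intro powr_mono2) auto
    finally show ?thesis by (simp add: \<rho>_def)
  qed
  then have "ennreal (C1c \<alpha> \<eta> q T * (Lam powr (\<rho>-1) * Lam)) \<le> ennreal (C1c \<alpha> \<eta> q T * Hsum s a powr (q/2))"
    using C1c_pos[OF T, of \<alpha> \<eta> q] by (intro ennreal_leI mult_left_mono) auto
  finally show ?thesis .
qed


lemma vnth_meas[measurable (raw)]:
  fixes X :: "'n \<Rightarrow> real^'m"
  shows "X \<in> borel_measurable N \<Longrightarrow> (\<lambda>n. X n $ i) \<in> borel_measurable N"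
  using measurable_compose[OF _ borel_measurable_nth] by blast

lemma kdot_meas[measurable (raw)]:
  assumes [measurable]: "X \<in> borel_measurable N"
  shows "(\<lambda>n. kdot k (X n)) \<in> borel_measurable N"
  unfolding kdot_def by measurable

lemma cis_meas[measurable]: "cis \<in> borel_measurable borel"
  by (intro borel_measurable_continuous_onI continuous_intros)

definition SJ :: "real \<Rightarrow> (int^3 \<Rightarrow> complex^3) \<Rightarrow> (int^3 \<Rightarrow> 'w \<Rightarrow> real) \<Rightarrow> (int^3) set \<Rightarrow> 'w \<Rightarrow> real \<Rightarrow> real^3 \<Rightarrow> complex^3" where
  "SJ \<alpha> a l J \<omega> t x = (\<Sum>k\<in>J. (\<chi> j. complex_of_real (exp (- t * (ksq k) powr \<alpha>) * l k \<omega>)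
                     * cis (kdot k x) * (a k $ j)))"

lemma norm_vec3: fixes z :: "complex^3" shows "norm z = sqrt (\<Sum>j\<in>UNIV. (cmod (z $ j))^2)"
  by (simp add: norm_vec_def L2_set_def)

lemma SJ_comp: "SJ \<alpha> a l J \<omega> t x $ j = (\<Sum>k\<in>J. complex_of_real (exp (- t * (ksq k) powr \<alpha>) * l k \<omega>) * cis (kdot k x) * (a k $ j))"
  by (simp add: SJ_def sum_component)

lemma SJ_meas[measurable (raw)]:
  fixes W :: "'n \<Rightarrow> 'w"
  assumes [measurable]: "W \<in> measurable N M" "Tf \<in> borel_measurable N" "X \<in> borel_measurable N"
    "\<And>k. l k \<in> borel_measurable M"
  shows "(\<lambda>n. norm (SJ \<alpha> a l J (W n) (Tf n) (X n))) \<in> borel_measurable N"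
  unfolding norm_vec3 SJ_comp by measurable


definition vv :: "real \<Rightarrow> (int^3 \<Rightarrow> complex^3) \<Rightarrow> real \<Rightarrow> real^3 \<Rightarrow> int^3 \<Rightarrow> complex^3" where
  "vv \<alpha> a t x k = (\<chi> j. complex_of_real (exp (- t * (ksq k) powr \<alpha>)) * cis (kdot k x) * (a k $ j))"

lemma norm_cis_vec: fixes b :: "complex^3" shows "norm (\<chi> j. z * cis \<theta> * b $ j) = cmod z * norm b"
proof -
  have "norm (\<chi> j. z * cis \<theta> * b $ j) = sqrt (\<Sum>j\<in>UNIV. (cmod z)^2 * (cmod (b $ j))^2)"
    by (simp add: norm_vec3 norm_mult power_mult_distrib)
  also have "\<dots> = cmod z * norm b"
    by (simp add: norm_vec3 sum_distrib_left[symmetric] real_sqrt_mult)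
  finally show ?thesis .
qed

lemma SJ_eq: "SJ \<alpha> a l J \<omega> t x = (\<Sum>k\<in>J. l k \<omega> *\<^sub>R vv \<alpha> a t x k)"
  unfolding SJ_def vv_def
  by (intro sum.cong refl) (simp add: vec_eq_iff, simp add: scaleR_conv_of_real mult_ac)

lemma norm_vv: "(norm (vv \<alpha> a t x k))^2 = (exp (- t * (ksq k) powr \<alpha>))^2 * (norm (a k))^2"
  unfolding vv_def by (simp add: norm_cis_vec power_mult_distrib)

lemma sig2_vv: "sig2 \<alpha> a J t = (\<Sum>k\<in>J. (norm (vv \<alpha> a t x k))^2)"
  by (simp add: sig2_def norm_vv)

lemma norm_SJ_le: "norm (SJ \<alpha> a l J \<omega> t x) \<le> (\<Sum>k\<in>J. \<bar>l k \<omega>\<bar> * (exp (- t * (ksq k) powr \<alpha>) * norm (a k)))"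
proof -
  have "norm (SJ \<alpha> a l J \<omega> t x) \<le> (\<Sum>k\<in>J. norm (l k \<omega> *\<^sub>R vv \<alpha> a t x k))"
    unfolding SJ_eq by (rule norm_sum)
  also have "\<dots> = (\<Sum>k\<in>J. \<bar>l k \<omega>\<bar> * (exp (- t * (ksq k) powr \<alpha>) * norm (a k)))"
    by (simp add: vv_def norm_cis_vec)
  finally show ?thesis .
qed

lemma sig2_pos: assumes "finite J" "k \<in> J" "a k \<noteq> 0" shows "sig2 \<alpha> a J t > 0"
proof -
  have "0 < (exp (-t * ksq k powr \<alpha>))^2 * (norm (a k))^2" using assms by simp
  also have "\<dots> \<le> sig2 \<alpha> a J t" unfolding sig2_def using assms by (intro member_le_sum) auto
  finally show ?thesis .
qed

lemma torus_fin: "emeasure lborel torus < \<top>"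
  unfolding torus_def using emeasure_lborel_cbox_finite by (metis infinity_ennreal_def)

lemma emeasure_torus: "emeasure lborel torus = ennreal (measure lborel torus)"
  using torus_fin by (simp add: emeasure_eq_ennreal_measure less_top)


lemma epow_ennreal_mult:
  assumes "0 \<le> u" "0 \<le> x" "b > 0"
  shows "epow (ennreal u * ennreal x) b = ennreal (u powr b * x powr b)"
  using assms by (simp add: ennreal_mult[symmetric] epow_ennreal powr_mult)

lemma SJ_zero:
  assumes "\<forall>k\<in>J. a k = 0"
  shows "SJ \<alpha> a l J \<omega> t x = 0"
  using assms unfolding SJ_def by (intro sum.neutral) (auto simp: vec_eq_iff)

lemma finite_bound:
  fixes M :: "'w measure" and l :: "int^3 \<Rightarrow> 'w \<Rightarrow> real" and a :: "int^3 \<Rightarrow> complex^3"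
  assumes P: "prob_space M" and ind: "prob_space.indep_vars M (\<lambda>_. borel) l UNIV"
    and mgf: "\<And>k \<gamma>. (\<integral>\<^sup>+\<omega>. ennreal (exp (\<gamma> * l k \<omega>)) \<partial>M) \<le> ennreal (exp (c * \<gamma>^2))"
    and c: "c \<ge> 0" and al: "\<alpha> > 0" and p: "2 \<le> p" and pq: "p \<le> q" and qr: "q \<le> r" and e: "\<eta> > 0" and T: "T > 0"
    and s: "s \<ge> - 2 * \<alpha> * \<eta> - 2 * \<alpha> / q" and J: "finite J" and H: "in_Hs s a"
  shows "(\<integral>\<^sup>+\<omega>. epow (wLqLp_norm T \<eta> q p (SJ \<alpha> a l J \<omega>)) r \<partial>M)
          \<le> ennreal ((72 * exp c * sqrt r * (measure lborel torus + 1) powr (1/p) * C1c \<alpha> \<eta> q T powr (1/q) * sqrt (Hsum s a)) powr r)"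
proof -
  interpret prob_space M by (rule P)
  have lm[measurable]: "l k \<in> borel_measurable M" for k
    using ind unfolding indep_vars_def by auto
  have p0: "p > 0" and q0: "q > 0" and r0: "r > 0" using p pq qr by auto
  show ?thesis
  proof (cases "\<forall>k\<in>J. a k = 0")
    case True
    have "epow (wLqLp_norm T \<eta> q p (SJ \<alpha> a l J \<omega>)) r = 0" for \<omega>
      using p0 q0 r0 by (simp add: SJ_zero[OF True] wLqLp_norm_def Lp_norm_def)
    then show ?thesis by simp
  next
    case False
    then obtain k0 where k0: "k0 \<in> J" "a k0 \<noteq> 0" by auto
    have sgpos: "sig2 \<alpha> a J t > 0" for t using sig2_pos[of J k0 a] J k0 by auto
    define S where "S = SJ \<alpha> a l J"
    define \<rho> where "\<rho> = r / q"
    define \<rho>x where "\<rho>x = r / p"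
    have rho1: "\<rho> \<ge> 1" and rhox1: "\<rho>x \<ge> 1" using q0 p0 qr pq by (auto simp: \<rho>_def \<rho>x_def)
    define V where "V = measure lborel torus"
    have V0: "V \<ge> 0" by (simp add: V_def)
    have emV: "emeasure lborel torus = ennreal V" unfolding V_def by (rule emeasure_torus)
    have torus_sets[measurable]: "torus \<in> sets lborel" unfolding torus_def by simp
    have torus_b[simp]: "torus \<in> sets borel" unfolding torus_def by simp
    define Kc where "Kc = 72 * exp c"
    define sg where "sg t = sig2 \<alpha> a J t" for t
    define w where "w t = t powr (\<eta>*q) * sg t powr (q/2)" for t
    have sg_meas[measurable]: "sg \<in> borel_measurable lborel"
      unfolding sg_def sig2_def by measurable
    have w_meas[measurable]: "w \<in> borel_measurable lborel" unfolding w_def by measurable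
    have wpos: "w t > 0" if "t > 0" for t using that sgpos[of t] by (simp add: w_def sg_def)
    have Wint: "(\<integral>\<^sup>+t. ennreal (w t) * indicator {0<..<T} t \<partial>lborel) \<le> ennreal (C1c \<alpha> \<eta> q T * Hsum s a powr (q/2))"
      unfolding w_def sg_def using W_bound[OF al e _ T s J H] p pq by simp
    define Wr where "Wr = enn2real (\<integral>\<^sup>+t. ennreal (w t) * indicator {0<..<T} t \<partial>lborel)"
    have Wfin: "(\<integral>\<^sup>+t. ennreal (w t) * indicator {0<..<T} t \<partial>lborel) < \<top>"
      using Wint by (rule le_less_trans) simp
    have Weq: "(\<integral>\<^sup>+t. ennreal (w t) * indicator {0<..<T} t \<partial>lborel) = ennreal Wr"
      using Wfin unfolding Wr_def by (simp add: ennreal_enn2real less_top)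
    have Wr0: "Wr \<ge> 0" by (simp add: Wr_def)
    have WrC: "Wr \<le> C1c \<alpha> \<eta> q T * Hsum s a powr (q/2)"
      using Wint unfolding Weq using C1c_pos[OF T, of \<alpha> \<eta> q]
      by (subst (asm) ennreal_le_iff) (auto intro!: mult_nonneg_nonneg)
    define X where "X \<omega> t = (\<integral>\<^sup>+x. ennreal (norm (S \<omega> t x) powr p) * indicator torus x \<partial>lborel)" for \<omega> t
    define Z where "Z \<omega> t = (\<integral>\<^sup>+x. ennreal (norm (S \<omega> t x) powr r) * indicator torus x \<partial>lborel)" for \<omega> t
    have Xfin: "X \<omega> t < \<top>" for \<omega> t
    proof -
      define B where "B = (\<Sum>k\<in>J. \<bar>l k \<omega>\<bar> * (exp (- t * (ksq k) powr \<alpha>) * norm (a k)))"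
      have "X \<omega> t \<le> (\<integral>\<^sup>+x. ennreal (B powr p) * indicator torus x \<partial>lborel)"
        unfolding X_def S_def B_def using p0
        by (intro nn_integral_mono mult_right_mono ennreal_leI powr_mono2 norm_SJ_le) auto
      also have "\<dots> = ennreal (B powr p) * ennreal V" by (subst nn_integral_cmult_indicator) (use torus_sets in \<open>auto simp: emV\<close>)
      also have "\<dots> < \<top>" by (simp add: ennreal_mult_less_top)
      finally show ?thesis .
    qed
    define f where "f \<omega> t = t powr (\<eta>*q) * enn2real (X \<omega> t) powr (q/p)" for \<omega> t
    have K1: "epow (wLqLp_norm T \<eta> q p (S \<omega>)) r = epow (\<integral>\<^sup>+t. ennreal (f \<omega> t) \<partial>restrict_space lborel {0<..<T}) \<rho>" for \<omega>
    proof -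
      have "(\<integral>\<^sup>+t. epow (ennreal (t powr \<eta>) * Lp_norm p (S \<omega> t)) q * indicator {0<..<T} t \<partial>lborel)
          = (\<integral>\<^sup>+t. ennreal (f \<omega> t) * indicator {0<..<T} t \<partial>lborel)"
      proof (intro nn_integral_cong)
        fix t
        show "epow (ennreal (t powr \<eta>) * Lp_norm p (S \<omega> t)) q * indicator {0<..<T} t = ennreal (f \<omega> t) * indicator {0<..<T} t"
        proof (cases "t \<in> {0<..<T}")
          case False then show ?thesis by simp
        next
          case True
          define x where "x = enn2real (X \<omega> t)"
          have Xx: "X \<omega> t = ennreal x" unfolding x_def using Xfin[of \<omega> t] by (simp add: ennreal_enn2real less_top)
          have x0: "x \<ge> 0" by (simp add: x_def)
          have "Lp_norm p (S \<omega> t) = epow (X \<omega> t) (1/p)" by (simp add: Lp_norm_def X_def)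
          also have "\<dots> = ennreal (x powr (1/p))" by (simp add: Xx epow_ennreal x0)
          finally have "epow (ennreal (t powr \<eta>) * Lp_norm p (S \<omega> t)) q = ennreal ((t powr \<eta>) powr q * (x powr (1/p)) powr q)"
            using q0 by (simp add: epow_ennreal_mult)
          also have "(t powr \<eta>) powr q * (x powr (1/p)) powr q = f \<omega> t"
            by (simp add: f_def x_def powr_powr)
          finally show ?thesis using True by simp
        qed
      qed
      also have "\<dots> = (\<integral>\<^sup>+t. ennreal (f \<omega> t) \<partial>restrict_space lborel {0<..<T})"
        by (subst nn_integral_restrict_space) auto
      finally have "wLqLp_norm T \<eta> q p (S \<omega>) = epow (\<integral>\<^sup>+t. ennreal (f \<omega> t) \<partial>restrict_space lborel {0<..<T}) (1/q)"
        by (simp add: wLqLp_norm_def)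
      then show ?thesis using q0 r0 by (simp add: epow_epow \<rho>_def)
    qed
    have Xm[measurable]: "(\<lambda>t. X \<omega> t) \<in> borel_measurable lborel" if [measurable]: "\<omega> \<in> space M" for \<omega>
      unfolding X_def S_def by measurable
    have fm[measurable]: "f \<omega> \<in> borel_measurable lborel" if [measurable]: "\<omega> \<in> space M" for \<omega>
      unfolding f_def by measurable
    define h where "h t = t powr (\<eta>*r) * w t powr (1-\<rho>)" for t
    have h_meas[measurable]: "h \<in> borel_measurable lborel" unfolding h_def by measurable
    define Vc where "Vc = V powr (\<rho>x - 1)"
    have Wr_N: "(\<integral>\<^sup>+t. ennreal (w t) \<partial>restrict_space lborel {0<..<T}) = ennreal Wr"
      by (subst nn_integral_restrict_space) (auto simp: Weq)
    have K3: "ennreal (f \<omega> t powr \<rho> * w t powr (1-\<rho>)) \<le> ennreal (h t) * Z \<omega> t * ennreal Vc"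
      if \<omega>: "\<omega> \<in> space M" and t: "t \<in> {0<..<T}" for \<omega> t
    proof -
      define x where "x = enn2real (X \<omega> t)"
      have Xx: "X \<omega> t = ennreal x" unfolding x_def using Xfin[of \<omega> t] by (simp add: ennreal_enn2real less_top)
      have x0: "x \<ge> 0" by (simp add: x_def)
      have t0: "t > 0" using t by simp
      have fr: "f \<omega> t powr \<rho> = t powr (\<eta>*r) * x powr \<rho>x"
      proof -
        have "f \<omega> t powr \<rho> = t powr (\<eta>*q*\<rho>) * x powr (q/p*\<rho>)"
          using t0 x0 by (simp add: f_def x_def powr_mult powr_powr)
        also have "\<eta>*q*\<rho> = \<eta>*r" using q0 by (simp add: \<rho>_def)
        also have "q/p*\<rho> = \<rho>x" using q0 by (simp add: \<rho>_def \<rho>x_def)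
        finally show ?thesis .
      qed
      have hx: "ennreal (x powr \<rho>x) \<le> Z \<omega> t * ennreal Vc"
      proof -
        have [measurable]: "(\<lambda>y. norm (S \<omega> t y) powr p) \<in> borel_measurable lborel"
          unfolding S_def using \<omega> by measurable
        have "epow (\<integral>\<^sup>+y. ennreal (norm (S \<omega> t y) powr p) \<partial>restrict_space lborel torus) \<rho>x
            \<le> (\<integral>\<^sup>+y. ennreal ((norm (S \<omega> t y) powr p) powr \<rho>x * 1 powr (1-\<rho>x)) \<partial>restrict_space lborel torus) *
               ennreal (enn2real (\<integral>\<^sup>+y. ennreal 1 \<partial>restrict_space lborel torus) powr (\<rho>x - 1))"
          using rhox1 torus_fin torus_sets by (intro holder_w) (auto intro: measurable_restrict_space1 simp: nn_integral_restrict_space emV emeasure_restrict_space space_restrict_space)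
        moreover have "(\<integral>\<^sup>+y. ennreal (norm (S \<omega> t y) powr p) \<partial>restrict_space lborel torus) = X \<omega> t"
          unfolding X_def by (subst nn_integral_restrict_space) auto
        moreover have "(\<integral>\<^sup>+y. ennreal ((norm (S \<omega> t y) powr p) powr \<rho>x * 1 powr (1-\<rho>x)) \<partial>restrict_space lborel torus) = Z \<omega> t"
          unfolding Z_def using p0 by (subst nn_integral_restrict_space) (auto simp: powr_powr \<rho>x_def)
        moreover have "(\<integral>\<^sup>+y. ennreal 1 \<partial>restrict_space lborel torus) = ennreal V"
          by (subst nn_integral_restrict_space) (auto simp: emV)
        ultimately show ?thesis using x0 by (simp add: Xx epow_ennreal Vc_def V0)
      qed
      have "f \<omega> t powr \<rho> * w t powr (1-\<rho>) = h t * x powr \<rho>x" by (simp add: fr h_def mult_ac)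
      then have "ennreal (f \<omega> t powr \<rho> * w t powr (1-\<rho>)) = ennreal (h t) * ennreal (x powr \<rho>x)"
        by (simp only: ennreal_mult[symmetric] h_def powr_ge_zero mult_nonneg_nonneg)
      also have "\<dots> \<le> ennreal (h t) * (Z \<omega> t * ennreal Vc)" by (intro mult_left_mono hx) auto
      finally show ?thesis by (simp add: mult.assoc)
    qed
    have K2: "epow (wLqLp_norm T \<eta> q p (S \<omega>)) r \<le>
        (\<integral>\<^sup>+t. ennreal (h t) * Z \<omega> t * ennreal Vc * indicator {0<..<T} t \<partial>lborel) * ennreal (Wr powr (\<rho> - 1))"
      if \<omega>: "\<omega> \<in> space M" for \<omega>
    proof -
      have A: "epow (\<integral>\<^sup>+t. ennreal (f \<omega> t) \<partial>restrict_space lborel {0<..<T}) \<rho>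
          \<le> (\<integral>\<^sup>+t. ennreal (f \<omega> t powr \<rho> * w t powr (1-\<rho>)) \<partial>restrict_space lborel {0<..<T}) *
              ennreal (enn2real (\<integral>\<^sup>+t. ennreal (w t) \<partial>restrict_space lborel {0<..<T}) powr (\<rho> - 1))"
        using rho1 \<omega> wpos Wfin
        by (intro holder_w) (auto intro: measurable_restrict_space1 simp: Wr_N f_def)
      have B: "(\<integral>\<^sup>+t. ennreal (f \<omega> t powr \<rho> * w t powr (1-\<rho>)) \<partial>restrict_space lborel {0<..<T})
          \<le> (\<integral>\<^sup>+t. ennreal (h t) * Z \<omega> t * ennreal Vc * indicator {0<..<T} t \<partial>lborel)"
        by (subst nn_integral_restrict_space) (auto intro!: nn_integral_mono K3[OF \<omega>] split: split_indicator)
      from order.trans[OF A mult_right_mono[OF B]] show ?thesis by (simp add: K1 Wr_N Wr0)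
    qed
    have sfM: "sigma_finite_measure M" by unfold_locales
    interpret pmT: pair_sigma_finite M "lborel :: real measure"
      by (intro pair_sigma_finite.intro sfM sigma_finite_lborel)
    interpret pmX: pair_sigma_finite M "lborel :: (real^3) measure"
      by (intro pair_sigma_finite.intro sfM sigma_finite_lborel)
    have ZB: "(\<integral>\<^sup>+\<omega>. Z \<omega> t \<partial>M) \<le> ennreal ((Kc * sqrt r * sqrt (sg t)) powr r) * ennreal V" for t
    proof -
      have m: "(\<lambda>(\<omega>, x). ennreal (norm (S \<omega> t x) powr r) * indicator torus x) \<in> borel_measurable (M \<Otimes>\<^sub>M lborel)"
        unfolding S_def by measurable
      have "(\<integral>\<^sup>+\<omega>. Z \<omega> t \<partial>M) = (\<integral>\<^sup>+x. (\<integral>\<^sup>+\<omega>. ennreal (norm (S \<omega> t x) powr r) * indicator torus x \<partial>M) \<partial>lborel)"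
        unfolding Z_def using pmX.Fubini'[OF m] by simp
      also have "\<dots> = (\<integral>\<^sup>+x. (\<integral>\<^sup>+\<omega>. ennreal (norm (S \<omega> t x) powr r) \<partial>M) * indicator torus x \<partial>lborel)"
        by (intro nn_integral_cong nn_integral_multc) (simp add: S_def)
      also have "\<dots> \<le> (\<integral>\<^sup>+x. ennreal ((Kc * sqrt r * sqrt (sg t)) powr r) * indicator torus x \<partial>lborel)"
      proof (intro nn_integral_mono mult_right_mono)
        fix x
        have "(\<integral>\<^sup>+\<omega>. ennreal (norm (S \<omega> t x) powr r) \<partial>M) = (\<integral>\<^sup>+\<omega>. ennreal (norm (\<Sum>k\<in>J. l k \<omega> *\<^sub>R vv \<alpha> a t x k) powr r) \<partial>M)"
          by (simp add: S_def SJ_eq)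
        also have "\<dots> \<le> ennreal ((72 * exp c * sqrt r * sqrt (\<Sum>k\<in>J. (norm (vv \<alpha> a t x k))^2)) powr r)"
          using r0 p qr pq by (intro khin_vec[OF P ind mgf J _ c]) auto
        finally show "(\<integral>\<^sup>+\<omega>. ennreal (norm (S \<omega> t x) powr r) \<partial>M) \<le> ennreal ((Kc * sqrt r * sqrt (sg t)) powr r)"
          by (simp add: Kc_def sg_def sig2_vv[symmetric])
      qed auto
      also have "\<dots> = ennreal ((Kc * sqrt r * sqrt (sg t)) powr r) * ennreal V"
        by (subst nn_integral_cmult_indicator) (auto simp: emV)
      finally show ?thesis .
    qed
    define G where "G \<omega> t = ennreal (h t) * Z \<omega> t * ennreal Vc * indicator {0<..<T} t" for \<omega> t
    have Gm: "(\<lambda>(\<omega>, t). G \<omega> t) \<in> borel_measurable (M \<Otimes>\<^sub>M lborel)"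
      unfolding G_def Z_def S_def by measurable
    have Gm2: "(\<lambda>\<omega>. \<integral>\<^sup>+t. G \<omega> t \<partial>lborel) \<in> borel_measurable M"
      using Gm by measurable
    have Zm: "(\<lambda>\<omega>. Z \<omega> t) \<in> borel_measurable M" for t
      unfolding Z_def S_def by measurable
    define cW where "cW = ennreal (Wr powr (\<rho> - 1))"
    have Q: "h t * (Kc * sqrt r * sqrt (sg t)) powr r = (Kc * sqrt r) powr r * w t" if t: "t > 0" for t
    proof -
      have sg0: "sg t > 0" using sgpos by (simp add: sg_def)
      have "(Kc * sqrt r * sqrt (sg t)) powr r = (Kc * sqrt r) powr r * sg t powr (r/2)"
        using sg0 r0 by (simp add: powr_mult Kc_def powr_half_sqrt[symmetric] powr_powr)
      moreover have "h t * sg t powr (r/2) = w t"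
      proof -
        have "w t powr (1-\<rho>) = t powr (\<eta>*q*(1-\<rho>)) * sg t powr (q/2*(1-\<rho>))"
          using t sg0 by (simp add: w_def powr_mult powr_powr)
        then have "h t * sg t powr (r/2) = t powr (\<eta>*r + \<eta>*q*(1-\<rho>)) * sg t powr (q/2*(1-\<rho>) + r/2)"
          by (simp add: h_def powr_add mult_ac)
        also have "\<eta>*r + \<eta>*q*(1-\<rho>) = \<eta>*q" using q0 by (simp add: \<rho>_def field_simps)
        also have "q/2*(1-\<rho>) + r/2 = q/2" using q0 by (simp add: \<rho>_def field_simps)
        finally show ?thesis by (simp add: w_def)
      qed
      ultimately show ?thesis by (simp add: mult_ac)
    qed
    have "(\<integral>\<^sup>+\<omega>. epow (wLqLp_norm T \<eta> q p (SJ \<alpha> a l J \<omega>)) r \<partial>M) \<le> (\<integral>\<^sup>+\<omega>. (\<integral>\<^sup>+t. G \<omega> t \<partial>lborel) * cW \<partial>M)"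
      using K2 unfolding S_def G_def cW_def by (intro nn_integral_mono) auto
    also have "\<dots> = (\<integral>\<^sup>+\<omega>. (\<integral>\<^sup>+t. G \<omega> t \<partial>lborel) \<partial>M) * cW"
      using Gm2 by (rule nn_integral_multc)
    also have "(\<integral>\<^sup>+\<omega>. (\<integral>\<^sup>+t. G \<omega> t \<partial>lborel) \<partial>M) = (\<integral>\<^sup>+t. (\<integral>\<^sup>+\<omega>. G \<omega> t \<partial>M) \<partial>lborel)"
      using pmT.Fubini'[OF Gm] by simp
    also have "\<dots> \<le> (\<integral>\<^sup>+t. ennreal (Vc * V * (Kc * sqrt r) powr r) * (ennreal (w t) * indicator {0<..<T} t) \<partial>lborel)"
    proof (intro nn_integral_mono)
      fix t
      have "(\<integral>\<^sup>+\<omega>. G \<omega> t \<partial>M) = (ennreal (h t) * ennreal Vc * indicator {0<..<T} t) * (\<integral>\<^sup>+\<omega>. Z \<omega> t \<partial>M)"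
        unfolding G_def by (subst nn_integral_cmult[symmetric]) (auto intro!: nn_integral_cong simp: Zm mult_ac)
      also have "\<dots> \<le> (ennreal (h t) * ennreal Vc * indicator {0<..<T} t) * (ennreal ((Kc * sqrt r * sqrt (sg t)) powr r) * ennreal V)"
        by (intro mult_left_mono ZB) auto
      also have "\<dots> = ennreal (Vc * V * (Kc * sqrt r) powr r) * (ennreal (w t) * indicator {0<..<T} t)"
      proof (cases "t \<in> {0<..<T}")
        case False then show ?thesis by simp
      next
        case True
        then have hq: "h t * (Kc * sqrt r * sqrt (sg t)) powr r = (Kc * sqrt r) powr r * w t" by (intro Q) simp
        have h0: "h t \<ge> 0" by (simp add: h_def)
        have Vc0: "Vc \<ge> 0" by (simp add: Vc_def)
        have w0: "w t \<ge> 0" using wpos[of t] True by simp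
        have "(ennreal (h t) * ennreal Vc * indicator {0<..<T} t) * (ennreal ((Kc * sqrt r * sqrt (sg t)) powr r) * ennreal V)
            = ennreal (Vc * V * (h t * (Kc * sqrt r * sqrt (sg t)) powr r))"
          using True h0 Vc0 V0 by (simp add: ennreal_mult mult_ac)
        also have "\<dots> = ennreal (Vc * V * ((Kc * sqrt r) powr r * w t))" by (simp only: hq)
        also have "\<dots> = ennreal (Vc * V * (Kc * sqrt r) powr r) * (ennreal (w t) * indicator {0<..<T} t)"
          using True w0 Vc0 V0 by (simp add: ennreal_mult mult_ac)
        finally show ?thesis .
      qed
      finally show "(\<integral>\<^sup>+\<omega>. G \<omega> t \<partial>M) \<le> \<dots>" .
    qed
    also have "\<dots> = ennreal (Vc * V * (Kc * sqrt r) powr r) * ennreal Wr"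
      by (subst nn_integral_cmult) (auto simp: Weq)
    finally have main: "(\<integral>\<^sup>+\<omega>. epow (wLqLp_norm T \<eta> q p (SJ \<alpha> a l J \<omega>)) r \<partial>M)
        \<le> ennreal (Vc * V * (Kc * sqrt r) powr r) * ennreal Wr * cW"
      by (simp add: mult_right_mono)
    define C1 where "C1 = C1c \<alpha> \<eta> q T"
    have C10: "C1 > 0" using C1c_pos[OF T] by (simp add: C1_def)
    define Hs where "Hs = Hsum s a"
    have Hs0: "Hs \<ge> 0" unfolding Hs_def Hsum_def by (intro infsum_nonneg) auto
    have ra: "Vc * V \<le> (V+1) powr \<rho>x"
    proof (cases "V = 0")
      case True then show ?thesis by simp
    next
      case False
      then have "Vc * V = V powr \<rho>x" using V0 by (simp add: Vc_def powr_diff)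
      also have "\<dots> \<le> (V+1) powr \<rho>x" using V0 rhox1 by (intro powr_mono2) auto
      finally show ?thesis .
    qed
    have rb: "Wr * Wr powr (\<rho>-1) \<le> C1 powr \<rho> * Hs powr (r/2)"
    proof (cases "Wr = 0")
      case True then show ?thesis by simp
    next
      case False
      then have "Wr * Wr powr (\<rho>-1) = Wr powr \<rho>" using Wr0 by (simp add: powr_diff)
      also have "\<dots> \<le> (C1 * Hs powr (q/2)) powr \<rho>" using Wr0 rho1 WrC by (intro powr_mono2) (auto simp: C1_def Hs_def)
      also have "\<dots> = C1 powr \<rho> * Hs powr (r/2)"
        using C10 Hs0 q0 by (simp add: powr_mult powr_powr \<rho>_def)
      finally show ?thesis .
    qed
    have rc: "(Kc * sqrt r * (V + 1) powr (1/p) * C1 powr (1/q) * sqrt Hs) powr r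
        = (Kc * sqrt r) powr r * (V+1) powr \<rho>x * (C1 powr \<rho> * Hs powr (r/2))"
      using V0 C10 Hs0 p0 q0 by (simp add: powr_mult powr_powr \<rho>_def \<rho>x_def Kc_def powr_half_sqrt[symmetric] mult_ac)
    have "ennreal (Vc * V * (Kc * sqrt r) powr r) * ennreal Wr * cW
        = ennreal ((Kc * sqrt r) powr r * (Vc * V) * (Wr * Wr powr (\<rho>-1)))"
      unfolding cW_def using Wr0 V0 by (simp add: ennreal_mult Vc_def mult_ac)
    also have "\<dots> \<le> ennreal ((Kc * sqrt r) powr r * (V+1) powr \<rho>x * (C1 powr \<rho> * Hs powr (r/2)))"
      by (rule ennreal_leI, rule mult_mono[OF mult_left_mono[OF ra] rb]) (use V0 Wr0 in auto)
    also have "\<dots> = ennreal ((Kc * sqrt r * (V + 1) powr (1/p) * C1 powr (1/q) * sqrt Hs) powr r)"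
      by (simp only: rc)
    finally show ?thesis using main unfolding Kc_def V_def C1_def Hs_def by simp
  qed
qed


lemma lsc_liminf:
  fixes \<phi> :: "ennreal \<Rightarrow> ennreal"
  assumes m: "mono \<phi>" and sc: "\<And>A. A \<noteq> {} \<Longrightarrow> \<phi> (Sup A) \<le> Sup (\<phi> ` A)"
  shows "\<phi> (liminf x) \<le> liminf (\<lambda>n. \<phi> (x n))"
proof -
  have "\<phi> (liminf x) = \<phi> (SUP n. INF i\<in>{n..}. x i)" by (simp add: liminf_SUP_INF)
  also have "\<dots> \<le> (SUP n. \<phi> (INF i\<in>{n..}. x i))"
    using sc[of "range (\<lambda>n. INF i\<in>{n..}. x i)"] by (simp add: image_image)
  also have "\<dots> \<le> (SUP n. INF i\<in>{n..}. \<phi> (x i))"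
    by (intro SUP_mono) (auto intro!: INF_greatest monoD[OF m] INF_lower)
  also have "\<dots> = liminf (\<lambda>n. \<phi> (x n))" by (simp add: liminf_SUP_INF)
  finally show ?thesis .
qed

lemma epow_inv: "a > 0 \<Longrightarrow> epow (epow x a) (1/a) = x"
  by (simp add: epow_epow epow_one)

lemma epow_sc: assumes a: "a > 0" shows "epow (Sup A) a \<le> Sup ((\<lambda>y. epow y a) ` A)"
proof -
  define B where "B = Sup ((\<lambda>y. epow y a) ` A)"
  have "y \<le> epow B (1/a)" if "y \<in> A" for y
  proof -
    have "epow y a \<le> B" unfolding B_def using that by (auto intro: Sup_upper)
    then have "epow (epow y a) (1/a) \<le> epow B (1/a)" using a by (intro epow_mono) auto
    then show ?thesis using a by (simp add: epow_inv)
  qed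
  then have "Sup A \<le> epow B (1/a)" by (intro Sup_least)
  then have "epow (Sup A) a \<le> epow (epow B (1/a)) a" using a by (intro epow_mono) auto
  also have "\<dots> = B" using a epow_inv[of "1/a" B] by simp
  finally show ?thesis unfolding B_def .
qed

lemma epow_liminf: "a > 0 \<Longrightarrow> epow (liminf x) a \<le> liminf (\<lambda>n. epow (x n) a)"
  by (intro lsc_liminf epow_sc) (auto intro: monoI epow_mono)

lemma cmult_sc: fixes c :: ennreal shows "c * Sup A \<le> Sup ((\<lambda>y. c * y) ` A)"
proof -
  have "c * (SUP y\<in>A. y) = (SUP y\<in>A. c * y)" by (rule SUP_mult_left_ennreal)
  then show ?thesis by simp
qed

lemma cmult_liminf: fixes c :: ennreal shows "c * liminf x \<le> liminf (\<lambda>n. c * x n)"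
  by (intro lsc_liminf[where \<phi>="\<lambda>y. c * y"] cmult_sc) (simp add: mono_def mult_left_mono)

lemma epow_meas[measurable (raw)]:
  assumes [measurable]: "f \<in> borel_measurable N"
  shows "(\<lambda>x. epow (f x) a) \<in> borel_measurable N"
  unfolding epow_def by measurable

definition Jn :: "nat \<Rightarrow> (int^3) set" where "Jn n = {k. \<forall>i. \<bar>k$i\<bar> \<le> int n}"

lemma Jn_finite: "finite (Jn n)"
proof -
  define g where "g k = (k$1, k$2, k$3)" for k :: "int^3"
  have "inj g" unfolding g_def by (auto intro!: injI simp: vec_eq_iff forall_3)
  moreover have "g ` Jn n \<subseteq> {-int n..int n} \<times> {-int n..int n} \<times> {-int n..int n}"
    by (auto simp: g_def Jn_def abs_le_iff) (metis add.inverse_inverse neg_le_iff_le)+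
  ultimately show ?thesis
    by (meson finite_SigmaI finite_atLeastAtMost_int finite_imageD finite_subset inj_on_subset subset_UNIV)
qed

lemma Jn_ev: assumes "finite X" shows "eventually (\<lambda>n. X \<subseteq> Jn n) sequentially"
  using assms
proof (induction X rule: finite_induct)
  case empty then show ?case by simp
next
  case (insert k X)
  define m where "m = nat (\<Sum>i\<in>UNIV. \<bar>k$i\<bar>)"
  have "k \<in> Jn n" if "n \<ge> m" for n
  proof -
    have "\<bar>k$i\<bar> \<le> (\<Sum>i\<in>UNIV. \<bar>k$i\<bar>)" for i by (rule member_le_sum) auto
    moreover have "(\<Sum>i\<in>UNIV. \<bar>k$i\<bar>) \<le> int n" using that by (simp add: m_def nat_le_iff)
    ultimately show ?thesis by (auto simp: Jn_def intro: order.trans)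
  qed
  then have "eventually (\<lambda>n. k \<in> Jn n) sequentially" by (auto simp: eventually_sequentially)
  with insert.IH show ?case by eventually_elim auto
qed

lemma lim_partial:
  fixes f :: "int^3 \<Rightarrow> 'b::{topological_comm_monoid_add, t2_space}"
  assumes "f summable_on UNIV"
  shows "(\<lambda>n. sum f (Jn n)) \<longlonglongrightarrow> infsum f UNIV"
proof -
  have "(sum f \<longlongrightarrow> infsum f UNIV) (finite_subsets_at_top UNIV)"
    using has_sum_infsum[OF assms] by (simp add: has_sum_def)
  moreover have "filterlim Jn (finite_subsets_at_top UNIV) sequentially"
    unfolding filterlim_finite_subsets_at_top
    by (auto intro: Jn_ev eventually_mono[OF Jn_ev] simp: Jn_finite)
  ultimately show ?thesis by (rule filterlim_compose)
qed

lemma ind_liminf: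
  fixes u :: "nat \<Rightarrow> ennreal"
  assumes "v \<le> liminf u"
  shows "v * indicator A y \<le> liminf (\<lambda>n. u n * indicator A y)"
  using assms by (cases "y \<in> A") auto

lemma Psi_liminf:
  fixes G :: "real \<Rightarrow> real^3 \<Rightarrow> complex^3" and Gs :: "nat \<Rightarrow> real \<Rightarrow> real^3 \<Rightarrow> complex^3"
  assumes pt: "\<And>t x. ennreal (norm (G t x) powr p) \<le> liminf (\<lambda>n. ennreal (norm (Gs n t x) powr p))"
    and mx: "\<And>n t. (\<lambda>x. ennreal (norm (Gs n t x) powr p) * indicator torus x) \<in> borel_measurable lborel"
    and mt: "\<And>n. (\<lambda>t. epow (ennreal (t powr \<eta>) * Lp_norm p (Gs n t)) q * indicator {0<..<T} t) \<in> borel_measurable lborel"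
    and p: "p > 0" and q: "q > 0" and r: "r > 0"
  shows "epow (wLqLp_norm T \<eta> q p G) r \<le> liminf (\<lambda>n. epow (wLqLp_norm T \<eta> q p (Gs n)) r)"
proof -
  define X where "X t = (\<integral>\<^sup>+x. ennreal (norm (G t x) powr p) * indicator torus x \<partial>lborel)" for t
  define Xs where "Xs n t = (\<integral>\<^sup>+x. ennreal (norm (Gs n t x) powr p) * indicator torus x \<partial>lborel)" for n t
  have LX: "X t \<le> liminf (\<lambda>n. Xs n t)" for t
  proof -
    have "X t \<le> (\<integral>\<^sup>+x. liminf (\<lambda>n. ennreal (norm (Gs n t x) powr p) * indicator torus x) \<partial>lborel)"
      unfolding X_def by (intro nn_integral_mono ind_liminf pt)
    also have "\<dots> \<le> liminf (\<lambda>n. Xs n t)" unfolding Xs_def by (intro nn_integral_liminf mx)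
    finally show ?thesis .
  qed
  define g where "g t = epow (ennreal (t powr \<eta>) * epow (X t) (1/p)) q * indicator {0<..<T} t" for t
  define gs where "gs n t = epow (ennreal (t powr \<eta>) * epow (Xs n t) (1/p)) q * indicator {0<..<T} t" for n t
  have Lg: "g t \<le> liminf (\<lambda>n. gs n t)" for t
  proof -
    have "epow (X t) (1/p) \<le> epow (liminf (\<lambda>n. Xs n t)) (1/p)" using p LX by (intro epow_mono) auto
    also have "\<dots> \<le> liminf (\<lambda>n. epow (Xs n t) (1/p))" using p by (intro epow_liminf) auto
    finally have "ennreal (t powr \<eta>) * epow (X t) (1/p) \<le> ennreal (t powr \<eta>) * liminf (\<lambda>n. epow (Xs n t) (1/p))"
      by (rule mult_left_mono) auto
    also have "\<dots> \<le> liminf (\<lambda>n. ennreal (t powr \<eta>) * epow (Xs n t) (1/p))" by (rule cmult_liminf)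
    finally have "epow (ennreal (t powr \<eta>) * epow (X t) (1/p)) q \<le> epow (liminf (\<lambda>n. ennreal (t powr \<eta>) * epow (Xs n t) (1/p))) q"
      using q by (intro epow_mono) auto
    also have "\<dots> \<le> liminf (\<lambda>n. epow (ennreal (t powr \<eta>) * epow (Xs n t) (1/p)) q)" using q by (intro epow_liminf)
    finally show ?thesis unfolding g_def gs_def by (rule ind_liminf)
  qed
  have gs_eq: "gs n = (\<lambda>t. epow (ennreal (t powr \<eta>) * Lp_norm p (Gs n t)) q * indicator {0<..<T} t)" for n
    by (simp add: gs_def Xs_def Lp_norm_def fun_eq_iff)
  have "(\<integral>\<^sup>+t. g t \<partial>lborel) \<le> (\<integral>\<^sup>+t. liminf (\<lambda>n. gs n t) \<partial>lborel)"
    by (intro nn_integral_mono Lg)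
  also have "\<dots> \<le> liminf (\<lambda>n. \<integral>\<^sup>+t. gs n t \<partial>lborel)"
    by (intro nn_integral_liminf) (use mt in \<open>simp add: gs_eq\<close>)
  finally have LY: "(\<integral>\<^sup>+t. g t \<partial>lborel) \<le> liminf (\<lambda>n. \<integral>\<^sup>+t. gs n t \<partial>lborel)" .
  have wF: "wLqLp_norm T \<eta> q p G = epow (\<integral>\<^sup>+t. g t \<partial>lborel) (1/q)"
    by (simp add: wLqLp_norm_def g_def X_def Lp_norm_def)
  have wS: "wLqLp_norm T \<eta> q p (Gs n) = epow (\<integral>\<^sup>+t. gs n t \<partial>lborel) (1/q)" for n
    by (simp add: wLqLp_norm_def gs_def Xs_def Lp_norm_def)
  have "epow (wLqLp_norm T \<eta> q p G) r = epow (\<integral>\<^sup>+t. g t \<partial>lborel) (1/q * r)"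
    using q r by (simp add: wF epow_epow)
  also have "\<dots> \<le> epow (liminf (\<lambda>n. \<integral>\<^sup>+t. gs n t \<partial>lborel)) (1/q * r)"
    using q r LY by (intro epow_mono) auto
  also have "\<dots> \<le> liminf (\<lambda>n. epow (\<integral>\<^sup>+t. gs n t \<partial>lborel) (1/q * r))"
    using q r by (intro epow_liminf) auto
  also have "\<dots> = liminf (\<lambda>n. epow (wLqLp_norm T \<eta> q p (Gs n)) r)"
    using q r by (simp add: wS epow_epow)
  finally show ?thesis .
qed


lemma pt_conv:
  assumes p: "p > 0"
  shows "ennreal (norm (free_evol \<alpha> a l \<omega> t x) powr p) \<le> liminf (\<lambda>n. ennreal (norm (SJ \<alpha> a l (Jn n) \<omega> t x) powr p))"
proof -
  define f where "f k = (\<chi> j. complex_of_real (exp (- t * (ksq k) powr \<alpha>) * l k \<omega>) * cis (kdot k x) * (a k $ j))" for k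
  have F: "free_evol \<alpha> a l \<omega> t x = infsum f UNIV" unfolding free_evol_def f_def by (rule refl)
  have S: "SJ \<alpha> a l J \<omega> t x = sum f J" for J by (simp add: SJ_def f_def)
  show ?thesis
  proof (cases "f summable_on UNIV")
    case True
    have "(\<lambda>n. sum f (Jn n)) \<longlonglongrightarrow> infsum f UNIV" by (rule lim_partial[OF True])
    then have "(\<lambda>n. ennreal (norm (sum f (Jn n)) powr p)) \<longlonglongrightarrow> ennreal (norm (infsum f UNIV) powr p)"
      using p by (intro tendsto_ennrealI tendsto_powr' tendsto_norm) auto
    then have "liminf (\<lambda>n. ennreal (norm (sum f (Jn n)) powr p)) = ennreal (norm (infsum f UNIV) powr p)"
      by (intro lim_imp_Liminf) auto
    then show ?thesis by (simp add: F S)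
  next
    case False
    then show ?thesis by (simp add: F infsum_not_exists)
  qed
qed

theorem lemma3p6:
  fixes M :: "'w measure" and l :: "int^3 \<Rightarrow> 'w \<Rightarrow> real" and c :: real
    and \<alpha> p q \<eta> s T :: real
  assumes "prob_space M"
    and "prob_space.indep_vars M (\<lambda>_. borel) l UNIV"
    and "\<And>k. integrable M (l k)"
    and "\<And>k. (\<integral>\<omega>. l k \<omega> \<partial>M) = 0"
    and "c > 0"
    and "\<And>k \<gamma>. (\<integral>\<^sup>+ \<omega>. ennreal (exp (\<gamma> * l k \<omega>)) \<partial>M) \<le> ennreal (exp (c * \<gamma>^2))"
    and "\<alpha> > 0" and "2 \<le> p" and "p \<le> q" and "\<eta> > 0" and "T > 0"
    and "s \<ge> - 2 * \<alpha> * \<eta> - 2 * \<alpha> / q + 1 / 2 - 1 / p"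
  shows "\<exists>C>0. \<forall>r a. q \<le> r \<longrightarrow> in_Hs s a \<longrightarrow>
           Lr_wLqLp_norm M r T \<eta> q p (free_evol \<alpha> a l)
             \<le> ennreal (C * sqrt r * Hs_norm s a)"
proof -
  note P = assms(1) and ind = assms(2) and mgf = assms(6)
  interpret prob_space M by (rule P)
  have lm[measurable]: "l k \<in> borel_measurable M" for k
    using ind unfolding indep_vars_def by auto
  have c0: "c \<ge> 0" using assms(5) by simp
  have p0: "p > 0" and q0: "q > 0" using assms(8,9) by auto
  have s': "s \<ge> - 2 * \<alpha> * \<eta> - 2 * \<alpha> / q"
  proof -
    have "1 / p \<le> 1 / 2" using assms(8) by (intro divide_left_mono) auto
    then show ?thesis using assms(12) by linarith
  qed
  define C where "C = 72 * exp c * (measure lborel torus + 1) powr (1/p) * C1c \<alpha> \<eta> q T powr (1/q)"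
  have V0: "0 \<le> measure lborel torus" by (rule measure_nonneg)
  have V1: "measure lborel torus + 1 > 0" using V0 by linarith
  have C0: "C > 0" unfolding C_def using C1c_pos[OF assms(11), of \<alpha> \<eta> q] V1
    by (intro mult_pos_pos) auto
  show ?thesis
  proof (intro exI[of _ C] conjI allI impI C0)
    fix r :: real and a :: "int^3 \<Rightarrow> complex^3"
    assume qr: "q \<le> r" and H: "in_Hs s a"
    have r0: "r > 0" using qr q0 by simp
    define B where "B = C * sqrt r * sqrt (Hsum s a)"
    have Hs0: "Hsum s a \<ge> 0" unfolding Hsum_def by (intro infsum_nonneg) auto
    have B0: "B \<ge> 0" unfolding B_def using C0 r0 Hs0 by simp
    have FB: "(\<integral>\<^sup>+\<omega>. epow (wLqLp_norm T \<eta> q p (SJ \<alpha> a l (Jn n) \<omega>)) r \<partial>M) \<le> ennreal (B powr r)" for n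
    proof -
      have "(\<integral>\<^sup>+\<omega>. epow (wLqLp_norm T \<eta> q p (SJ \<alpha> a l (Jn n) \<omega>)) r \<partial>M)
          \<le> ennreal ((72 * exp c * sqrt r * (measure lborel torus + 1) powr (1/p) * C1c \<alpha> \<eta> q T powr (1/q) * sqrt (Hsum s a)) powr r)"
        by (rule finite_bound[OF P ind mgf c0 assms(7,8,9) qr assms(10,11) s' Jn_finite H])
      also have "72 * exp c * sqrt r * (measure lborel torus + 1) powr (1/p) * C1c \<alpha> \<eta> q T powr (1/q) * sqrt (Hsum s a) = B"
        by (simp add: B_def C_def mult_ac)
      finally show ?thesis .
    qed
    have Pm: "(\<lambda>\<omega>. epow (wLqLp_norm T \<eta> q p (SJ \<alpha> a l (Jn n) \<omega>)) r) \<in> borel_measurable M" for n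
      unfolding wLqLp_norm_def Lp_norm_def torus_def by measurable
    have PT: "epow (wLqLp_norm T \<eta> q p (free_evol \<alpha> a l \<omega>)) r \<le> liminf (\<lambda>n. epow (wLqLp_norm T \<eta> q p (SJ \<alpha> a l (Jn n) \<omega>)) r)"
      if \<omega>[measurable]: "\<omega> \<in> space M" for \<omega>
    proof (rule Psi_liminf)
      show "ennreal (norm (free_evol \<alpha> a l \<omega> t x) powr p) \<le> liminf (\<lambda>n. ennreal (norm (SJ \<alpha> a l (Jn n) \<omega> t x) powr p))" for t x
        by (rule pt_conv[OF p0])
      show "(\<lambda>x. ennreal (norm (SJ \<alpha> a l (Jn n) \<omega> t x) powr p) * indicator torus x) \<in> borel_measurable lborel" for n t
        unfolding torus_def by measurable
      show "(\<lambda>t. epow (ennreal (t powr \<eta>) * Lp_norm p (SJ \<alpha> a l (Jn n) \<omega> t)) q * indicator {0<..<T} t) \<in> borel_measurable lborel" for n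
        unfolding Lp_norm_def torus_def by measurable
    qed (use p0 q0 r0 in auto)
    have "(\<integral>\<^sup>+\<omega>. epow (wLqLp_norm T \<eta> q p (free_evol \<alpha> a l \<omega>)) r \<partial>M)
        \<le> (\<integral>\<^sup>+\<omega>. liminf (\<lambda>n. epow (wLqLp_norm T \<eta> q p (SJ \<alpha> a l (Jn n) \<omega>)) r) \<partial>M)"
      by (intro nn_integral_mono PT)
    also have "\<dots> \<le> liminf (\<lambda>n. \<integral>\<^sup>+\<omega>. epow (wLqLp_norm T \<eta> q p (SJ \<alpha> a l (Jn n) \<omega>)) r \<partial>M)"
      by (intro nn_integral_liminf Pm)
    also have "\<dots> \<le> ennreal (B powr r)"
    proof -
      have "liminf (\<lambda>n. \<integral>\<^sup>+\<omega>. epow (wLqLp_norm T \<eta> q p (SJ \<alpha> a l (Jn n) \<omega>)) r \<partial>M)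
          \<le> limsup (\<lambda>n. \<integral>\<^sup>+\<omega>. epow (wLqLp_norm T \<eta> q p (SJ \<alpha> a l (Jn n) \<omega>)) r \<partial>M)"
        by (rule Liminf_le_Limsup) simp
      also have "\<dots> \<le> ennreal (B powr r)" by (intro Limsup_bounded always_eventually allI FB)
      finally show ?thesis .
    qed
    finally have E: "(\<integral>\<^sup>+\<omega>. epow (wLqLp_norm T \<eta> q p (free_evol \<alpha> a l \<omega>)) r \<partial>M) \<le> ennreal (B powr r)" .
    have "Lr_wLqLp_norm M r T \<eta> q p (free_evol \<alpha> a l) \<le> epow (ennreal (B powr r)) (1/r)"
      unfolding Lr_wLqLp_norm_def using r0 by (intro epow_mono E) auto
    also have "\<dots> = ennreal B" using r0 B0 by (simp add: epow_ennreal powr_powr)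
    also have "B = C * sqrt r * Hs_norm s a" by (simp add: B_def Hs_norm_def Hsum_def)
    finally show "Lr_wLqLp_norm M r T \<eta> q p (free_evol \<alpha> a l) \<le> ennreal (C * sqrt r * Hs_norm s a)" .
  qed
qed


end
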